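(* Let $\mathcal D_1=\{\psi\in H^1(0,\infty):\ \psi(0)=0,\ \int_0^\infty|\psi|^2dx=1,\ \int_0^\infty x|\psi(x)|^2dx<\infty\}$. For every $m>0$, $$\min\Big\{\int_0^\infty|\psi'(x)|^2dx:\ \psi\in\mathcal D_1,\ \int_0^\infty x|\psi(x)|^2dx=m\Big\}=\frac{\eta^2}{m^2},$$ and the minimum is attained by $\psi(x)=c\,\mathrm{Ai}(\lambda x-x_0)$ for the appropriate $\lambda>0$ (namely $\lambda=\bar C C_1/m$) and normalization constant $c$. Equivalently, $\big(\int_0^\infty|\psi'|^2\big)\big(\int_0^\infty x|\psi|^2\big)^2\ge\eta^2$ for all $\psi\in\mathcal D_1$, with equality for these Airy profiles.
   Context: $\mathrm{Ai}$ is the Airy function of the first kind and $-x_0$ (with $x_0\approx2.338$) is its zero of smallest absolute value. Define $\bar C=\big[\int_0^\infty\mathrm{Ai}(x-x_0)^2dx\big]^{-1}$, $C_1=\int_0^\infty x\,\mathrm{Ai}(x-x_0)^2dx$, $C_2=\int_0^\infty\big(\tfrac{d}{dx}\mathrm{Ai}(x-x_0)\big)^2dx$, and $\eta^2:=\bar C^3C_1^2C_2$ (numerically $\eta^2\approx1.89$). In the battery interpretation $\int|\psi'|^2$ is the unitary defect and $\omega\int x|\psi|^2/\delta$ the mean battery energy of the state with amplitudes $\propto\psi(n\delta)$. *)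

theory Defs
  imports "HOL-Analysis.Analysis"
begin

text \<open>Ai(x) = Ai(0) * sum_k 3^k (1/3)_k x^(3k)/(3k)! + Ai'(0) * sum_k 3^k (2/3)_k x^(3k+1)/(3k+1)!,
  with Ai(0) = 1/(3^(2/3) Gamma(2/3)) and Ai'(0) = -1/(3^(1/3) Gamma(1/3)).\<close>

definition Ai :: "real \<Rightarrow> real" where
  "Ai x =
     (1 / (3 powr (2/3) * Gamma (2/3))) *
       (\<Sum>k. 3 ^ k * pochhammer (1/3) k * x ^ (3*k) / fact (3*k))
   - (1 / (3 powr (1/3) * Gamma (1/3))) *
       (\<Sum>k. 3 ^ k * pochhammer (2/3) k * x ^ (3*k+1) / fact (3*k+1))"

definition x0 :: real where
  "x0 = (THE a. a > 0 \<and> Ai (- a) = 0 \<and> (\<forall>z. Ai z = 0 \<longrightarrow> a \<le> \<bar>z\<bar>))"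

definition Cbar :: real where
  "Cbar = 1 / (LINT x:{0..}|lborel. (Ai (x - x0))\<^sup>2)"

definition C1 :: real where
  "C1 = (LINT x:{0..}|lborel. x * (Ai (x - x0))\<^sup>2)"

definition C2 :: real where
  "C2 = (LINT x:{0..}|lborel. (deriv (\<lambda>y. Ai (y - x0)) x)\<^sup>2)"

definition eta2 :: real where
  "eta2 = Cbar ^ 3 * C1 ^ 2 * C2"

text \<open>psi belongs to H^1(0,infinity) with psi(0) = 0, and g is its (weak) derivative:
  g is locally integrable, psi is its (continuous) primitive vanishing at 0, and both
  psi and g are square integrable on [0,infinity).\<close>

definition H1_0 :: "(real \<Rightarrow> complex) \<Rightarrow> (real \<Rightarrow> complex) \<Rightarrow> bool" where
  "H1_0 \<psi> g \<longleftrightarrow>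
     g \<in> borel_measurable lborel \<and>
     (\<forall>x\<ge>0. set_integrable lborel {0..x} g \<and> \<psi> x = (LINT t:{0..x}|lborel. g t)) \<and>
     set_integrable lborel {0..} (\<lambda>x. (cmod (\<psi> x))\<^sup>2) \<and>
     set_integrable lborel {0..} (\<lambda>x. (cmod (g x))\<^sup>2)"

definition D1 :: "(real \<Rightarrow> complex) \<Rightarrow> (real \<Rightarrow> complex) \<Rightarrow> bool" where
  "D1 \<psi> g \<longleftrightarrow>
     H1_0 \<psi> g \<and>
     (LINT x:{0..}|lborel. (cmod (\<psi> x))\<^sup>2) = 1 \<and>
     set_integrable lborel {0..} (\<lambda>x. x * (cmod (\<psi> x))\<^sup>2)"

definition defect :: "(real \<Rightarrow> complex) \<Rightarrow> real" where
  "defect g = (LINT x:{0..}|lborel. (cmod (g x))\<^sup>2)"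

definition moment :: "(real \<Rightarrow> complex) \<Rightarrow> real" where
  "moment \<psi> = (LINT x:{0..}|lborel. x * (cmod (\<psi> x))\<^sup>2)"

end

theory Submission
  imports Defs "HOL-Real_Asymp.Real_Asymp"
begin

definition A0 :: real where "A0 = 1 / (3 powr (2/3) * Gamma (2/3))"
definition A1 :: real where "A1 = 1 / (3 powr (1/3) * Gamma (1/3))"

lemma A0_pos: "A0 > 0" unfolding A0_def by simp
lemma A1_pos: "A1 > 0" unfolding A1_def by simp

fun ac :: "nat \<Rightarrow> real" where
  "ac 0 = A0"
| "ac (Suc 0) = - A1"
| "ac (Suc (Suc 0)) = 0"
| "ac (Suc (Suc (Suc n))) = ac n / ((real n + 2) * (real n + 3))"

lemma cancel_helper: "(c::real) \<noteq> 0 \<Longrightarrow> A * (P / F) / d = A * (P * c / (F * (c * d)))"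
  by (cases "F = 0"; cases "d = 0"; simp add: field_simps)

lemma ac_3k: "ac (3*k) = A0 * (3 ^ k * pochhammer (1/3) k / fact (3*k))"
proof (induction k)
  case 0 then show ?case by simp
next
  case (Suc k)
  have e: "3 * Suc k = Suc (Suc (Suc (3*k)))" by simp
  have f: "fact (3 * Suc k) = (fact (3*k) :: real) * ((3*real k+1)*(3*real k+2)*(3*real k+3))"
    unfolding e by (simp add: algebra_simps)
  have p: "3 ^ Suc k * pochhammer (1/3) (Suc k) = 3 ^ k * pochhammer (1/3) k * (3 * real k + 1)"
    by (simp add: pochhammer_rec' algebra_simps)
  have "ac (3 * Suc k) = ac (3*k) / ((3*real k+2)*(3*real k+3))" unfolding e by (simp add: algebra_simps)
  also have "\<dots> = A0 * (3 ^ k * pochhammer (1/3) k / fact (3*k)) / ((3*real k+2)*(3*real k+3))" using Suc by simp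
  also have "\<dots> = A0 * (3 ^ k * pochhammer (1/3) k * (3 * real k + 1) / (fact (3*k) * ((3*real k+1)*((3*real k+2)*(3*real k+3)))))"
    by (rule cancel_helper) (smt (verit) of_nat_0_le_iff)
  also have "\<dots> = A0 * (3 ^ k * pochhammer (1/3) k * (3 * real k + 1) / (fact (3*k) * ((3*real k+1)*(3*real k+2)*(3*real k+3))))"
    by (simp only: mult.assoc)
  also have "\<dots> = A0 * (3 ^ Suc k * pochhammer (1/3) (Suc k) / fact (3 * Suc k))"
    by (simp only: p f)
  finally show ?case .
qed

lemma ac_3k1: "ac (3*k+1) = - A1 * (3 ^ k * pochhammer (2/3) k / fact (3*k+1))"
proof (induction k)
  case 0 then show ?case by simp
next
  case (Suc k)
  have e: "3 * Suc k + 1 = Suc (Suc (Suc (3*k+1)))" by simp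
  have f: "fact (3 * Suc k + 1) = (fact (3*k+1) :: real) * ((3*real k+2)*(3*real k+3)*(3*real k+4))"
    unfolding e by (simp add: algebra_simps)
  have p: "3 ^ Suc k * pochhammer (2/3) (Suc k) = 3 ^ k * pochhammer (2/3) k * (3 * real k + 2)"
    by (simp add: pochhammer_rec' algebra_simps)
  have "ac (3 * Suc k + 1) = ac (3*k+1) / ((3*real k+3)*(3*real k+4))" unfolding e by (simp add: algebra_simps)
  also have "\<dots> = - A1 * (3 ^ k * pochhammer (2/3) k / fact (3*k+1)) / ((3*real k+3)*(3*real k+4))" using Suc by simp
  also have "\<dots> = - A1 * (3 ^ k * pochhammer (2/3) k * (3 * real k + 2) / (fact (3*k+1) * ((3*real k+2)*((3*real k+3)*(3*real k+4)))))"
    by (rule cancel_helper) (smt (verit) of_nat_0_le_iff)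
  also have "\<dots> = - A1 * (3 ^ k * pochhammer (2/3) k * (3 * real k + 2) / (fact (3*k+1) * ((3*real k+2)*(3*real k+3)*(3*real k+4))))"
    by (simp only: mult.assoc)
  also have "\<dots> = - A1 * (3 ^ Suc k * pochhammer (2/3) (Suc k) / fact (3 * Suc k + 1))"
    by (simp only: p f)
  finally show ?case .
qed

lemma ac_3k2: "ac (3*k+2) = 0"
  by (induction k) (simp_all add: numeral_eq_Suc)

lemma ratio_aux:
  fixes x :: real and a :: "nat \<Rightarrow> real" and r :: nat
  assumes rec: "\<And>k. a (Suc k) = a k * x ^ 3 / ((3 * real k + r + 2) * (3 * real k + r + 3))"
  shows "summable a"
proof (rule summable_ratio_test[of "1/2" "nat \<lceil>\<bar>x\<bar>^3\<rceil>"])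
  fix n assume n: "nat \<lceil>\<bar>x\<bar>^3\<rceil> \<le> n"
  have "\<bar>x\<bar>^3 \<le> real n" using n by linarith
  moreover have "(3 * real n + r + 2) * (3 * real n + r + 3) \<ge> 2 * real n + 2"
  proof -
    have "(3 * real n + r + 2) * (3 * real n + r + 3) \<ge> (3 * real n + r + 2) * 1"
      by (rule mult_left_mono) auto
    moreover have "(3 * real n + r + 2) * 1 \<ge> 2 * real n + 2" by simp
    ultimately show ?thesis by linarith
  qed
  ultimately have d: "2 * \<bar>x\<bar>^3 \<le> (3 * real n + r + 2) * (3 * real n + r + 3)" by linarith
  have pos: "(3 * real n + r + 2) * (3 * real n + r + 3) > 0" by (simp add: add_pos_nonneg)
  have "norm (a (Suc n)) = norm (a n) * \<bar>x\<bar>^3 / ((3 * real n + r + 2) * (3 * real n + r + 3))"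
    using pos by (simp add: rec abs_mult power_abs)
  also have "\<dots> = norm (a n) * (\<bar>x\<bar>^3 / ((3 * real n + r + 2) * (3 * real n + r + 3)))"
    by simp
  also have "\<dots> \<le> norm (a n) * (1/2)"
    apply (rule mult_left_mono) using pos d by (simp_all add: divide_le_eq)
  finally show "norm (a (Suc n)) \<le> 1/2 * norm (a n)" by simp
qed simp

lemma ac_sums: "(\<lambda>n. ac n * x^n) sums
   ((\<Sum>k. ac (3*k) * x^(3*k)) + (\<Sum>k. ac (3*k+1) * x^(3*k+1)))"
  and ac_sum0: "summable (\<lambda>k. ac (3*k) * x^(3*k))"
  and ac_sum1: "summable (\<lambda>k. ac (3*k+1) * x^(3*k+1))"
proof -
  define u where "u k = ac (3*k) * x^(3*k)" for k
  define v where "v k = ac (3*k+1) * x^(3*k+1)" for k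
  have "u (Suc k) = u k * x ^ 3 / ((3 * real k + real 0 + 2) * (3 * real k + real 0 + 3))" for k
  proof -
    have e: "3 * Suc k = Suc (Suc (Suc (3*k)))" by simp
    show ?thesis unfolding u_def e by (simp add: power_add algebra_simps power3_eq_cube)
  qed
  then have su: "summable u" by (rule ratio_aux)
  have "v (Suc k) = v k * x ^ 3 / ((3 * real k + real 1 + 2) * (3 * real k + real 1 + 3))" for k
  proof -
    have e: "3 * Suc k + 1 = Suc (Suc (Suc (3*k+1)))" by simp
    show ?thesis unfolding v_def e by (simp add: power_add algebra_simps power3_eq_cube)
  qed
  then have sv: "summable v" by (rule ratio_aux)
  show "summable (\<lambda>k. ac (3*k) * x^(3*k))" using su unfolding u_def .
  show "summable (\<lambda>k. ac (3*k+1) * x^(3*k+1))" using sv unfolding v_def .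
  have m0: "strict_mono (\<lambda>k::nat. 3*k)" by (rule strict_monoI) simp
  have m1: "strict_mono (\<lambda>k::nat. 3*k+1)" by (rule strict_monoI) simp
  have s0: "(\<lambda>n. if n mod 3 = 0 then ac n * x^n else 0) sums suminf u"
  proof (subst sums_mono_reindex[OF m0, symmetric])
    show "(\<lambda>k. if 3 * k mod 3 = 0 then ac (3 * k) * x ^ (3 * k) else 0) sums suminf u"
      using summable_sums[OF su] unfolding u_def by simp
    fix n :: nat assume "n \<notin> range (\<lambda>k. 3*k)"
    moreover have "n mod 3 = 0 \<Longrightarrow> n = 3 * (n div 3)" by presburger
    ultimately have "n mod 3 \<noteq> 0" by blast
    then show "(if n mod 3 = 0 then ac n * x ^ n else 0) = 0" by simp
  qed
  have s1: "(\<lambda>n. if n mod 3 = 1 then ac n * x^n else 0) sums suminf v"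
  proof (subst sums_mono_reindex[OF m1, symmetric])
    show "(\<lambda>k. if (3 * k + 1) mod 3 = 1 then ac (3 * k + 1) * x ^ (3 * k + 1) else 0) sums suminf v"
      using summable_sums[OF sv] unfolding v_def by simp
    fix n :: nat assume "n \<notin> range (\<lambda>k. 3*k+1)"
    moreover have "n mod 3 = 1 \<Longrightarrow> n = 3 * (n div 3) + 1" by presburger
    ultimately have "n mod 3 \<noteq> 1" by blast
    then show "(if n mod 3 = 1 then ac n * x ^ n else 0) = 0" by simp
  qed
  have eq: "ac n * x^n = (if n mod 3 = 0 then ac n * x^n else 0) + (if n mod 3 = 1 then ac n * x^n else 0)" for n
  proof -
    consider "n mod 3 = 0" | "n mod 3 = 1" | "n mod 3 = 2" by linarith
    then show ?thesis
    proof cases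
      case 3
      then have "n = 3 * (n div 3) + 2" by presburger
      then have "ac n = 0" using ac_3k2[of "n div 3"] by simp
      then show ?thesis by simp
    qed auto
  qed
  show "(\<lambda>n. ac n * x^n) sums ((\<Sum>k. ac (3*k) * x^(3*k)) + (\<Sum>k. ac (3*k+1) * x^(3*k+1)))"
    apply (subst eq) using sums_add[OF s0 s1] unfolding u_def v_def by simp
qed

lemma summable_ac: "summable (\<lambda>n. ac n * x^n)"
  using ac_sums sums_summable by blast

lemma Ai_ser: "Ai x = (\<Sum>n. ac n * x^n)"
proof -
  have t0: "(\<lambda>k. ac (3*k) * x^(3*k)) = (\<lambda>k. A0 * (3 ^ k * pochhammer (1/3) k * x ^ (3*k) / fact (3*k)))"
    unfolding ac_3k by (simp add: algebra_simps)
  have t1: "(\<lambda>k. ac (3*k+1) * x^(3*k+1)) = (\<lambda>k. - A1 * (3 ^ k * pochhammer (2/3) k * x ^ (3*k+1) / fact (3*k+1)))"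
    unfolding ac_3k1 by (simp add: algebra_simps)
  have su0: "summable (\<lambda>k. 3 ^ k * pochhammer (1/3) k * x ^ (3*k) / fact (3*k))"
  proof -
    have "summable (\<lambda>k. (1/A0) * (A0 * (3 ^ k * pochhammer (1/3) k * x ^ (3*k) / fact (3*k))))"
      using ac_sum0[of x] unfolding t0 by (rule summable_mult)
    then show ?thesis using A0_pos by simp
  qed
  have su1: "summable (\<lambda>k. 3 ^ k * pochhammer (2/3) k * x ^ (3*k+1) / fact (3*k+1))"
  proof -
    have "summable (\<lambda>k. (-1/A1) * (- A1 * (3 ^ k * pochhammer (2/3) k * x ^ (3*k+1) / fact (3*k+1))))"
      using ac_sum1[of x] unfolding t1 by (rule summable_mult)
    then show ?thesis using A1_pos by simp
  qed
  have "Ai x = A0 * (\<Sum>k. 3 ^ k * pochhammer (1/3) k * x ^ (3*k) / fact (3*k))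
            - A1 * (\<Sum>k. 3 ^ k * pochhammer (2/3) k * x ^ (3*k+1) / fact (3*k+1))"
    unfolding Ai_def A0_def A1_def by simp
  also have "\<dots> = (\<Sum>k. ac (3*k) * x^(3*k)) + (\<Sum>k. ac (3*k+1) * x^(3*k+1))"
    unfolding t0 t1 using suminf_mult[OF su0, of A0] suminf_mult[OF su1, of "-A1"] by simp
  also have "\<dots> = (\<Sum>n. ac n * x^n)" using sums_unique[OF ac_sums[of x]] by simp
  finally show ?thesis .
qed

definition Aid :: "real \<Rightarrow> real" where "Aid x = (\<Sum>n. diffs ac n * x^n)"

lemma Ai_deriv: "(Ai has_real_derivative Aid x) (at x)"
proof -
  have "((\<lambda>x. \<Sum>n. ac n * x^n) has_real_derivative (\<Sum>n. diffs ac n * x^n)) (at x)"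
    by (rule termdiffs_strong_converges_everywhere) (rule summable_ac)
  moreover have "(\<lambda>x. \<Sum>n. ac n * x^n) = Ai" using Ai_ser by auto
  ultimately show ?thesis unfolding Aid_def by simp
qed

lemma diffs_diffs_ac: "diffs (diffs ac) n = (if n = 0 then 0 else ac (n - 1))"
proof (cases n)
  case 0 then show ?thesis by (simp add: diffs_def numeral_2_eq_2)
next
  case (Suc m)
  have "diffs (diffs ac) n = real (Suc (Suc m)) * real (Suc (Suc (Suc m))) * ac (Suc (Suc (Suc m)))"
    unfolding Suc diffs_def by simp
  also have "\<dots> = (real m + 2) * (real m + 3) * (ac m / ((real m + 2) * (real m + 3)))"
    by (simp add: algebra_simps)
  also have "\<dots> = ac m"
  proof -
    have "(real m + 2) * (real m + 3) \<noteq> 0" by (smt (verit) of_nat_0_le_iff mult_pos_pos)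
    then show ?thesis by simp
  qed
  finally show ?thesis using Suc by simp
qed

lemma Aid_deriv: "(Aid has_real_derivative x * Ai x) (at x)"
proof -
  have sd: "summable (\<lambda>n. diffs ac n * y^n)" for y
    by (rule termdiff_converges_all) (rule summable_ac)
  have "((\<lambda>x. \<Sum>n. diffs ac n * x^n) has_real_derivative (\<Sum>n. diffs (diffs ac) n * x^n)) (at x)"
    by (rule termdiffs_strong_converges_everywhere) (rule sd)
  moreover have "(\<Sum>n. diffs (diffs ac) n * x^n) = x * Ai x"
  proof -
    have "(\<lambda>m. diffs (diffs ac) (Suc m) * x^(Suc m)) = (\<lambda>m. x * (ac m * x^m))"
      by (simp add: diffs_diffs_ac algebra_simps del: diffs_def)
    moreover have "(\<lambda>m. x * (ac m * x^m)) sums (x * Ai x)"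
      unfolding Ai_ser by (rule sums_mult) (rule summable_sums[OF summable_ac])
    ultimately have "(\<lambda>m. diffs (diffs ac) (Suc m) * x^(Suc m)) sums (x * Ai x)" by simp
    then have "(\<lambda>n. diffs (diffs ac) n * x^n) sums (x * Ai x + diffs (diffs ac) 0 * x^0)"
      by (rule sums_Suc)
    then have "(\<Sum>n. diffs (diffs ac) n * x^n) = x * Ai x + diffs (diffs ac) 0 * x^0"
      by (rule sums_unique[symmetric])
    then show ?thesis by (simp add: diffs_diffs_ac del: diffs_def)
  qed
  ultimately show ?thesis unfolding Aid_def by (simp add: fun_eq_iff)
qed

lemma Ai_0: "Ai 0 = A0"
  unfolding Ai_ser by (simp add: powser_zero)

lemma Aid_0: "Aid 0 = - A1"
  unfolding Aid_def by (simp add: powser_zero diffs_def)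

lemma isCont_Ai: "isCont Ai x" using Ai_deriv DERIV_isCont by blast
lemma isCont_Aid: "isCont Aid x" using Aid_deriv DERIV_isCont by blast
lemma continuous_on_Ai: "continuous_on S Ai" by (simp add: continuous_at_imp_continuous_on isCont_Ai)
lemma continuous_on_Aid: "continuous_on S Aid" by (simp add: continuous_at_imp_continuous_on isCont_Aid)


lemma Gamma_lebesgue:
  fixes s :: real
  assumes s: "s > 0"
  shows "set_integrable lborel {0<..} (\<lambda>t. t powr (s-1) * exp (-t))"
    and "(LINT t:{0<..}|lborel. t powr (s-1) * exp (-t)) = Gamma s"
proof -
  define h where "h t = indicator {0<..} t * (t powr (s-1) * exp (-t))" for t :: real
  have hm: "h \<in> borel_measurable lborel" unfolding h_def by measurable
  have "AE t in lborel. t \<noteq> 0" by (rule AE_lborel_singleton)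
  then have ae: "AE t in lborel. ennreal (indicator {0..} t * t powr (s - 1) / exp t) = ennreal (h t)"
    by eventually_elim (auto simp: h_def indicator_def exp_minus field_simps)
  have nn: "(\<integral>\<^sup>+t. ennreal (h t) \<partial>lborel) = ennreal (Gamma s)"
    using Gamma_conv_nn_integral_real[OF s] nn_integral_cong_AE[OF ae] by simp
  have h0: "AE t in lborel. 0 \<le> h t" by (auto simp: h_def indicator_def)
  have ih: "integrable lborel h" by (rule integrableI_nn_integral_finite[OF hm h0 nn])
  then show "set_integrable lborel {0<..} (\<lambda>t. t powr (s-1) * exp (-t))"
    unfolding set_integrable_def h_def by simp
  have "integral\<^sup>L lborel h = enn2real (\<integral>\<^sup>+t. ennreal (h t) \<partial>lborel)"
    by (rule integral_eq_nn_integral[OF hm h0])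
  also have "\<dots> = Gamma s" using nn s by simp
  finally show "(LINT t:{0<..}|lborel. t powr (s-1) * exp (-t)) = Gamma s"
    unfolding set_lebesgue_integral_def h_def by simp
qed

definition Gn :: "nat \<Rightarrow> real" where
  "Gn n = (LINT r:{0<..}|lborel. r ^ n * exp (- (r ^ 3 / 3)))"

lemma Gn_aux:
  shows "set_integrable lborel {0<..} (\<lambda>r::real. r ^ n * exp (- (r ^ 3 / 3)))"
    and "Gn n = 3 powr ((real n - 2) / 3) * Gamma ((real n + 1) / 3)"
proof -
  define f where "f r = r ^ n * exp (- (r ^ 3 / 3))" for r :: real
  define g where "g t = (3 * t) powr (1/3)" for t :: real
  define g' where "g' t = (3 * t) powr (-2/3)" for t :: real
  define s where "s = (real n + 1) / 3"
  have s: "s > 0" unfolding s_def by simp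
  have fg: "f (g t) * g' t = 3 powr ((real n - 2) / 3) * (t powr (s - 1) * exp (- t))" if t: "t > 0" for t
  proof -
    have p: "(3 * t) powr (1/3) > 0" using t by simp
    have a: "((3 * t) powr (1/3)) ^ n = (3 * t) powr (real n / 3)"
      using p by (simp add: powr_realpow[symmetric] powr_powr)
    have b: "((3 * t) powr (1/3)) ^ 3 = 3 * t"
      using t by (simp add: powr_realpow[symmetric] powr_powr)
    have "f (g t) * g' t = (3 * t) powr (real n / 3) * (3 * t) powr (-2/3) * exp (- t)"
      unfolding f_def g_def g'_def a b by simp
    also have "\<dots> = (3 * t) powr ((real n - 2) / 3) * exp (- t)"
      by (simp add: powr_add[symmetric] field_simps)
    also have "\<dots> = 3 powr ((real n - 2) / 3) * (t powr (s - 1) * exp (- t))"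
      using t by (simp add: powr_mult s_def field_simps)
    finally show ?thesis .
  qed
  have int_fg: "set_integrable lborel (einterval 0 \<infinity>) (\<lambda>t. f (g t) * g' t)"
  proof -
    have "set_integrable lborel {0<..} (\<lambda>t. 3 powr ((real n - 2) / 3) * (t powr (s - 1) * exp (- t)))"
      using Gamma_lebesgue(1)[OF s] by simp
    then show ?thesis
      by (subst set_integrable_cong[OF refl _ fg]) (auto simp: zero_ereal_def)
  qed
  have deriv: "(g has_real_derivative g' t) (at t)" if "0 < t" for t
    using that unfolding g_def g'_def
    by (auto intro!: derivative_eq_intros simp: powr_minus field_simps powr_add[symmetric]
        powr_diff)
  note sub = interval_integral_substitution_nonneg[where a=0 and b=\<infinity> and g=g and g'=g' and f=f
      and A=0 and B=\<infinity>]
  have lim0: "((ereal \<circ> g \<circ> real_of_ereal) \<longlongrightarrow> 0) (at_right 0)"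
    unfolding g_def zero_ereal_def ereal_tendsto_simps
    using eventually_at_right_less[of "0::real"]
    by (auto intro!: tendsto_eq_intros elim: eventually_mono)
  have liminf: "((ereal \<circ> g \<circ> real_of_ereal) \<longlongrightarrow> \<infinity>) (at_left \<infinity>)"
    unfolding g_def ereal_tendsto_simps
    by real_asymp
  have nn: "0 \<le> f (g x)" for x unfolding f_def g_def by simp
  have c1: "isCont f (g x)" for x unfolding f_def by (intro continuous_intros) auto
  have c2: "isCont g' x" if "0 < x" for x using that unfolding g'_def by (intro continuous_intros) auto
  have P: "set_integrable lborel (einterval 0 \<infinity>) f \<and>
      (LBINT x=0..\<infinity>. f x) = (LBINT x=0..\<infinity>. f (g x) * g' x)"
    using sub[OF _ _ _ _ _ _ lim0 liminf int_fg] deriv c1 c2 nn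
    by (auto simp: g'_def zero_ereal_def)
  then show "set_integrable lborel {0<..} (\<lambda>r::real. r ^ n * exp (- (r ^ 3 / 3)))"
    by (simp add: f_def[abs_def] zero_ereal_def)
  have "Gn n = (LBINT x=0..\<infinity>. f (g x) * g' x)"
    using P unfolding Gn_def f_def by (simp add: zero_ereal_def interval_integral_to_infinity_eq)
  also have "\<dots> = (LINT t:{0<..}|lborel. 3 powr ((real n - 2) / 3) * (t powr (s - 1) * exp (- t)))"
    unfolding zero_ereal_def interval_integral_to_infinity_eq
    by (rule set_lebesgue_integral_cong) (auto simp: fg)
  also have "\<dots> = 3 powr ((real n - 2) / 3) * Gamma s"
    using Gamma_lebesgue(2)[OF s] by simp
  finally show "Gn n = 3 powr ((real n - 2) / 3) * Gamma ((real n + 1) / 3)" unfolding s_def .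
qed

lemma Gn_rec: "Gn (n + 3) = (real n + 1) * Gn n"
proof -
  have g: "Gamma ((real n + 1) / 3 + 1) = ((real n + 1) / 3) * Gamma ((real n + 1) / 3)"
    by (rule Gamma_plus1) (auto simp: nonpos_Ints_def)
  have e: "(real (n + 3) + 1) / 3 = (real n + 1) / 3 + 1" by simp
  have p: "3 powr ((real (n + 3) - 2) / 3) = 3 * 3 powr ((real n - 2) / 3)"
  proof -
    have "3 powr ((real (n + 3) - 2) / 3) = 3 powr (1 + (real n - 2) / 3)"
      by (rule arg_cong[where f="(powr) 3"]) (simp add: field_simps)
    also have "\<dots> = 3 powr 1 * 3 powr ((real n - 2) / 3)" by (rule powr_add)
    finally show ?thesis by simp
  qed
  show ?thesis unfolding Gn_aux(2) e p g by simp
qed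

lemma Gn_0: "Gn 0 = 3 powr (-2/3) * Gamma (1/3)" by (simp add: Gn_aux(2))
lemma Gn_1: "Gn 1 = 3 powr (-1/3) * Gamma (2/3)" by (simp add: Gn_aux(2))

lemma Gamma_refl_real: "Gamma t * Gamma (1 - t) = pi / sin (pi * t)"
proof -
  have "Gamma (complex_of_real t) * Gamma (1 - complex_of_real t)
        = of_real pi / sin (of_real pi * complex_of_real t)"
    by (rule Gamma_reflection_complex)
  moreover have e1: "1 - complex_of_real t = complex_of_real (1 - t)" by simp
  moreover have e2: "of_real pi * complex_of_real t = complex_of_real (pi * t)" by simp
  ultimately have "complex_of_real (Gamma t) * complex_of_real (Gamma (1 - t)) = complex_of_real pi / complex_of_real (sin (pi * t))"
    unfolding e1 e2 Gamma_complex_of_real sin_of_real by simp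
  then have "complex_of_real (Gamma t * Gamma (1 - t)) = complex_of_real (pi / sin (pi * t))"
    by (simp only: of_real_mult of_real_divide)
  then show ?thesis using of_real_eq_iff by blast
qed

lemma Gamma_refl_third: "Gamma (1/3) * Gamma (2/3) = 2 * pi / sqrt 3"
proof -
  have "Gamma (1/3) * Gamma (1 - 1/3) = pi / sin (pi * (1/3))" by (rule Gamma_refl_real)
  moreover have "(1::real) - 1/3 = 2/3" by simp
  moreover have "pi * (1/3) = pi / 3" by simp
  ultimately have "Gamma (1/3) * Gamma (2/3) = pi / sin (pi/3)" by simp
  also have "\<dots> = 2 * pi / sqrt 3" by (simp add: sin_60)
  finally show ?thesis .
qed

definition om :: complex where "om = cis (pi/3)"
definition cc :: "nat \<Rightarrow> real" where "cc n = Im (om * (- om) ^ n)"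
definition Phi :: "real \<Rightarrow> real \<Rightarrow> real" where
  "Phi x r = exp (- (r ^ 3 / 3)) * Im (om * exp (- (complex_of_real (x * r) * om)))"

lemma om_cube: "om ^ 3 = -1"
proof -
  have h: "cis (pi/3) ^ 3 = cis (pi/3 + pi/3 + pi/3)" by (simp only: power3_eq_cube cis_mult)
  have e: "pi/3 + pi/3 + pi/3 = pi" by simp
  show ?thesis unfolding om_def h e by simp
qed

lemma cc_rec: "cc (n + 3) = cc n"
proof -
  have "(- om) ^ (n + 3) = (- om) ^ n * (- (om ^ 3))" by (simp add: power_add)
  then show ?thesis unfolding cc_def om_cube by simp
qed

lemma cc_0: "cc 0 = sqrt 3 / 2" unfolding cc_def om_def by (simp add: sin_60)
lemma cc_1: "cc 1 = - sqrt 3 / 2"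
proof -
  have "om * om = cis (2 * pi / 3)" unfolding om_def by (simp add: cis_mult)
  moreover have "sin (2 * pi / 3) = sqrt 3 / 2"
  proof -
    have "sin (2 * pi / 3) = sin (pi - pi / 3)" by (simp add: field_simps)
    also have "\<dots> = sin (pi / 3)" by (rule sin_pi_minus)
    also have "\<dots> = sqrt 3 / 2" by (simp add: sin_60)
    finally show ?thesis .
  qed
  ultimately show ?thesis unfolding cc_def by simp
qed
lemma cc_2: "cc 2 = 0"
proof -
  have "om * (- om) ^ 2 = om ^ 3" by (simp add: power2_eq_square power3_eq_cube)
  then show ?thesis unfolding cc_def om_cube by simp
qed

lemma cc_bound: "\<bar>cc n\<bar> \<le> 1"
proof -
  have "\<bar>cc n\<bar> \<le> cmod (om * (- om) ^ n)" unfolding cc_def by (rule abs_Im_le_cmod)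
  also have "\<dots> = 1" unfolding om_def by (simp add: norm_mult norm_power)
  finally show ?thesis .
qed

lemma cancel_helper2: "(c::real) \<noteq> 0 \<Longrightarrow> c * X / (F * (c * d * e) * P) = X / (F * P) / (d * e)"
  by (cases "F = 0"; cases "d = 0"; cases "e = 0"; cases "P = 0"; simp add: field_simps)

lemma bc_eq_ac: "Gn n * cc n / (fact n * pi) = ac n"
proof (induction n rule: ac.induct)
  case 1
  have "Gn 0 * cc 0 / (fact 0 * pi) = 3 powr (-2/3) * Gamma (1/3) * (sqrt 3 / 2) / pi"
    by (simp add: Gn_0 cc_0)
  also have "\<dots> = A0"
  proof -
    have g2: "Gamma (2/3::real) > 0" by simp
    have nz: "Gamma (2/3::real) \<noteq> 0" using g2 by linarith
    have "Gamma (1/3) = (Gamma (1/3) * Gamma (2/3)) / Gamma (2/3::real)" using nz by simp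
    then have "Gamma (1/3) = 2 * pi / sqrt 3 / Gamma (2/3::real)" by (simp only: Gamma_refl_third)
    then show ?thesis unfolding A0_def
      by (simp add: powr_minus field_simps nz)
  qed
  finally show ?case by simp
next
  case 2
  have "Gn 1 * cc 1 / (fact 1 * pi) = - (3 powr (-1/3) * Gamma (2/3) * (sqrt 3 / 2) / pi)"
    by (simp add: Gn_1[unfolded One_nat_def] cc_1[unfolded One_nat_def])
  also have "\<dots> = - A1"
  proof -
    have g1: "Gamma (1/3::real) > 0" by simp
    have nz: "Gamma (1/3::real) \<noteq> 0" using g1 by linarith
    have "Gamma (2/3) = (Gamma (1/3) * Gamma (2/3)) / Gamma (1/3::real)" using nz by simp
    then have "Gamma (2/3) = 2 * pi / sqrt 3 / Gamma (1/3::real)" by (simp only: Gamma_refl_third)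
    then show ?thesis unfolding A1_def
      by (simp add: powr_minus field_simps nz)
  qed
  finally show ?case by simp
next
  case 3
  show ?case using cc_2 by (simp add: numeral_2_eq_2)
next
  case (4 n)
  have e: "Suc (Suc (Suc n)) = n + 3" by simp
  have f: "fact (n + 3) = (fact n :: real) * ((real n + 1) * (real n + 2) * (real n + 3))"
  proof -
    have "fact (n + 3) = (fact n :: real) * (real n + 1) * (real n + 2) * (real n + 3)"
      by (simp add: e[symmetric] algebra_simps)
    then show ?thesis by (simp add: mult.assoc)
  qed
  have "Gn (n + 3) * cc (n + 3) / (fact (n + 3) * pi)
      = (real n + 1) * (Gn n * cc n) / (fact n * ((real n + 1) * (real n + 2) * (real n + 3)) * pi)"
    unfolding Gn_rec cc_rec f by (simp add: mult.assoc)
  also have "\<dots> = (Gn n * cc n / (fact n * pi)) / ((real n + 2) * (real n + 3))"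
    by (rule cancel_helper2) (smt (verit) of_nat_0_le_iff)
  also have "\<dots> = ac (Suc (Suc (Suc n)))" using 4 by simp
  finally show ?case unfolding e .
qed

lemma exp_poly_bound:
  fixes b r :: real
  assumes r: "r \<ge> 0"
  shows "b * r - r ^ 3 / 3 \<le> b ^ 2 + 1"
proof -
  have 1: "b * r \<le> b ^ 2 + r ^ 2 / 4"
  proof -
    have "0 \<le> (b - r / 2) ^ 2" by simp
    then show ?thesis by (simp add: power2_eq_square algebra_simps)
  qed
  have 2: "r ^ 2 / 4 - r ^ 3 / 3 \<le> 1"
  proof (cases "r \<le> 1")
    case True
    have "r ^ 2 \<le> 1" using True r by (simp add: power_le_one)
    moreover have "r ^ 3 \<ge> 0" using r by simp
    ultimately show ?thesis by linarith
  next
    case False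
    have "r ^ 2 * 1 \<le> r ^ 2 * r" using False by (intro mult_left_mono) auto
    then have "r ^ 2 \<le> r ^ 3" by (simp add: power3_eq_cube power2_eq_square)
    moreover have "r ^ 2 \<ge> 0" by simp
    ultimately show ?thesis by linarith
  qed
  show ?thesis using 1 2 by linarith
qed

lemma exp_minus_integrable: "set_integrable lborel {0<..} (\<lambda>t::real. exp (- t))"
proof -
  have "set_integrable lborel {0<..} (\<lambda>t::real. t powr (1 - 1) * exp (- t))"
    by (rule Gamma_lebesgue(1)) simp
  then show ?thesis by (rule set_integrable_cong[THEN iffD1, rotated -1]) auto
qed

lemma dom_integrable: "set_integrable lborel {0<..} (\<lambda>r::real. exp (- (r ^ 3 / 3)) * exp (a * r))"
proof (rule set_integrable_bound[OF _ _ AE_I2])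
  define b where "b = \<bar>a\<bar> + 1"
  show "set_integrable lborel {0<..} (\<lambda>r::real. exp (b ^ 2 + 1) * exp (- r))"
    using exp_minus_integrable by simp
  show "set_borel_measurable lborel {0<..} (\<lambda>r::real. exp (- (r ^ 3 / 3)) * exp (a * r))"
    unfolding set_borel_measurable_def by measurable
  fix r :: real
  show "r \<in> {0<..} \<longrightarrow> norm (exp (- (r ^ 3 / 3)) * exp (a * r)) \<le> norm (exp (b ^ 2 + 1) * exp (- r))"
  proof
    assume "r \<in> {0<..}"
    then have r: "r \<ge> 0" by simp
    have "a * r \<le> (b - 1) * r" using r unfolding b_def by (intro mult_right_mono) auto
    then have "a * r - r ^ 3 / 3 \<le> (b ^ 2 + 1) - r" using exp_poly_bound[OF r, of b]
      by (simp add: algebra_simps)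
    then have "exp (- (r ^ 3 / 3)) * exp (a * r) \<le> exp (b ^ 2 + 1) * exp (- r)"
      by (simp add: exp_add[symmetric])
    then show "norm (exp (- (r ^ 3 / 3)) * exp (a * r)) \<le> norm (exp (b ^ 2 + 1) * exp (- r))"
      by simp
  qed
qed

lemma Im_ofreal_mult: "Im (complex_of_real a * w) = a * Im w" by simp

lemma Phi_sums: "(\<lambda>n. r ^ n * exp (- (r ^ 3 / 3)) * (cc n * x ^ n / fact n)) sums Phi x r"
proof -
  define z where "z = - (complex_of_real (x * r) * om)"
  have "(\<lambda>n. om * (z ^ n /\<^sub>R fact n)) sums (om * exp z)"
    by (rule sums_mult) (rule exp_converges)
  then have "(\<lambda>n. Im (om * (z ^ n /\<^sub>R fact n))) sums Im (om * exp z)"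
    by (rule sums_Im)
  then have "(\<lambda>n. exp (- (r ^ 3 / 3)) * Im (om * (z ^ n /\<^sub>R fact n))) sums (exp (- (r ^ 3 / 3)) * Im (om * exp z))"
    by (rule sums_mult)
  moreover have "exp (- (r ^ 3 / 3)) * Im (om * (z ^ n /\<^sub>R fact n)) = r ^ n * exp (- (r ^ 3 / 3)) * (cc n * x ^ n / fact n)" for n
  proof -
    have "z ^ n = complex_of_real ((x * r) ^ n) * (- om) ^ n"
      unfolding z_def by (simp add: power_mult_distrib[symmetric])
    then have "om * (z ^ n /\<^sub>R fact n) = complex_of_real ((x * r) ^ n / fact n) * (om * (- om) ^ n)"
      by (simp add: scaleR_conv_of_real field_simps)
    then have "Im (om * (z ^ n /\<^sub>R fact n)) = (x * r) ^ n / fact n * cc n"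
      unfolding cc_def by (simp only: Im_ofreal_mult)
    then show ?thesis by (simp add: power_mult_distrib field_simps)
  qed
  ultimately show ?thesis unfolding Phi_def z_def by simp
qed

lemma partial_bound:
  assumes r: "r \<ge> 0"
  shows "\<bar>\<Sum>n<N. r ^ n * exp (- (r ^ 3 / 3)) * (cc n * x ^ n / fact n)\<bar> \<le> exp (- (r ^ 3 / 3)) * exp (\<bar>x\<bar> * r)"
proof -
  have "\<bar>\<Sum>n<N. r ^ n * exp (- (r ^ 3 / 3)) * (cc n * x ^ n / fact n)\<bar>
      \<le> (\<Sum>n<N. \<bar>r ^ n * exp (- (r ^ 3 / 3)) * (cc n * x ^ n / fact n)\<bar>)"
    by (rule sum_abs)
  also have "\<dots> \<le> (\<Sum>n<N. exp (- (r ^ 3 / 3)) * ((\<bar>x\<bar> * r) ^ n / fact n))"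
  proof (rule sum_mono)
    fix n
    have "\<bar>r ^ n * exp (- (r ^ 3 / 3)) * (cc n * x ^ n / fact n)\<bar>
       = exp (- (r ^ 3 / 3)) * ((\<bar>x\<bar> * r) ^ n / fact n) * \<bar>cc n\<bar>"
      using r by (simp add: abs_mult power_abs power_mult_distrib)
    also have "\<dots> \<le> exp (- (r ^ 3 / 3)) * ((\<bar>x\<bar> * r) ^ n / fact n) * 1"
      using cc_bound r by (intro mult_left_mono) auto
    finally show "\<bar>r ^ n * exp (- (r ^ 3 / 3)) * (cc n * x ^ n / fact n)\<bar> \<le> exp (- (r ^ 3 / 3)) * ((\<bar>x\<bar> * r) ^ n / fact n)"
      by simp
  qed
  also have "\<dots> = exp (- (r ^ 3 / 3)) * (\<Sum>n<N. (\<bar>x\<bar> * r) ^ n / fact n)"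
    by (simp add: sum_distrib_left)
  also have "\<dots> \<le> exp (- (r ^ 3 / 3)) * exp (\<bar>x\<bar> * r)"
  proof (rule mult_left_mono)
    have s: "summable (\<lambda>n. (\<bar>x\<bar> * r) ^ n / fact n)"
      using exp_converges[of "\<bar>x\<bar> * r"] by (simp add: sums_iff divide_inverse scaleR_conv_of_real mult.commute)
    have "(\<Sum>n<N. (\<bar>x\<bar> * r) ^ n / fact n) \<le> (\<Sum>n. (\<bar>x\<bar> * r) ^ n / fact n)"
      by (rule sum_le_suminf[OF s]) (use r in auto)
    also have "\<dots> = exp (\<bar>x\<bar> * r)"
      using exp_converges[of "\<bar>x\<bar> * r"] by (simp add: sums_iff divide_inverse scaleR_conv_of_real mult.commute)
    finally show "(\<Sum>n<N. (\<bar>x\<bar> * r) ^ n / fact n) \<le> exp (\<bar>x\<bar> * r)" .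
  qed simp
  finally show ?thesis .
qed

definition AiI :: "real \<Rightarrow> real" where "AiI x = (LINT r:{0<..}|lborel. Phi x r)"

lemma Phi_measurable: "Phi x \<in> borel_measurable lborel"
  unfolding Phi_def by measurable

lemma AiI_sums: "(\<lambda>n. Gn n * (cc n * x ^ n / fact n)) sums AiI x"
  and AiI_integrable: "set_integrable lborel {0<..} (Phi x)"
proof -
  define t where "t n r = r ^ n * exp (- (r ^ 3 / 3)) * (cc n * x ^ n / fact n)" for n and r :: real
  define s where "s N r = indicator {0<..} r * (\<Sum>n<N. t n r)" for N r
  define f where "f r = indicator {0<..} r * Phi x r" for r
  define w where "w r = indicator {0<..} r * (exp (- (r ^ 3 / 3)) * exp (\<bar>x\<bar> * r))" for r :: real
  have fm: "f \<in> borel_measurable lborel" unfolding f_def using Phi_measurable by measurable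
  have sm: "s N \<in> borel_measurable lborel" for N unfolding s_def t_def by measurable
  have wi: "integrable lborel w"
    using dom_integrable[of "\<bar>x\<bar>"] unfolding set_integrable_def w_def by simp
  have lim: "AE r in lborel. (\<lambda>N. s N r) \<longlonglongrightarrow> f r"
  proof (rule AE_I2)
    fix r :: real
    show "(\<lambda>N. s N r) \<longlonglongrightarrow> f r"
    proof (cases "r > 0")
      case True
      have "(\<lambda>N. \<Sum>n<N. t n r) \<longlonglongrightarrow> Phi x r"
        using Phi_sums[of r x] unfolding sums_def t_def .
      then show ?thesis unfolding s_def f_def using True by simp
    next
      case False
      then show ?thesis unfolding s_def f_def by simp
    qed
  qed
  have bound: "AE r in lborel. norm (s N r) \<le> w r" for N
  proof (rule AE_I2)
    fix r :: real
    show "norm (s N r) \<le> w r"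
    proof (cases "r > 0")
      case True
      then show ?thesis unfolding s_def w_def t_def using partial_bound[where r=r and N=N and x=x] by simp
    next
      case False
      then show ?thesis unfolding s_def w_def by simp
    qed
  qed
  have fi: "integrable lborel f"
    by (rule integrable_dominated_convergence[OF fm sm wi lim bound])
  then show "set_integrable lborel {0<..} (Phi x)"
    unfolding set_integrable_def f_def by simp
  have L: "(\<lambda>N. integral\<^sup>L lborel (s N)) \<longlonglongrightarrow> integral\<^sup>L lborel f"
    by (rule integral_dominated_convergence[OF fm sm wi lim bound])
  have ti: "integrable lborel (\<lambda>r. indicator {0<..} r * t n r)" for n
  proof -
    have "integrable lborel (\<lambda>r. indicator {0<..} r * (r ^ n * exp (- (r ^ 3 / 3))) * (cc n * x ^ n / fact n))"
      using Gn_aux(1)[of n] unfolding set_integrable_def by simp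
    then show ?thesis unfolding t_def by (simp add: mult.assoc)
  qed
  have tv: "integral\<^sup>L lborel (\<lambda>r. indicator {0<..} r * t n r) = Gn n * (cc n * x ^ n / fact n)" for n
  proof -
    have "integral\<^sup>L lborel (\<lambda>r. indicator {0<..} r * t n r)
       = integral\<^sup>L lborel (\<lambda>r. indicator {0<..} r * (r ^ n * exp (- (r ^ 3 / 3))) * (cc n * x ^ n / fact n))"
      unfolding t_def by (simp add: mult.assoc)
    also have "\<dots> = Gn n * (cc n * x ^ n / fact n)"
      unfolding integral_mult_left_zero Gn_def set_lebesgue_integral_def by simp
    finally show ?thesis .
  qed
  have "integral\<^sup>L lborel (s N) = (\<Sum>n<N. Gn n * (cc n * x ^ n / fact n))" for N
  proof -
    have "integral\<^sup>L lborel (s N) = integral\<^sup>L lborel (\<lambda>r. \<Sum>n<N. indicator {0<..} r * t n r)"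
      unfolding s_def by (simp add: sum_distrib_left)
    also have "\<dots> = (\<Sum>n<N. integral\<^sup>L lborel (\<lambda>r. indicator {0<..} r * t n r))"
      by (rule Bochner_Integration.integral_sum) (rule ti)
    finally show ?thesis using tv by simp
  qed
  moreover have "integral\<^sup>L lborel f = AiI x"
    unfolding AiI_def f_def set_lebesgue_integral_def by simp
  ultimately show "(\<lambda>n. Gn n * (cc n * x ^ n / fact n)) sums AiI x"
    using L unfolding sums_def by simp
qed

lemma Ai_eq_AiI: "Ai x = AiI x / pi"
proof -
  have "(\<lambda>n. Gn n * (cc n * x ^ n / fact n) / pi) sums (AiI x / pi)"
    by (rule sums_divide) (rule AiI_sums)
  moreover have "Gn n * (cc n * x ^ n / fact n) / pi = ac n * x ^ n" for n
    using bc_eq_ac[of n] by (simp add: field_simps)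
  ultimately have "(\<lambda>n. ac n * x ^ n) sums (AiI x / pi)" by simp
  then show ?thesis unfolding Ai_ser by (simp add: sums_iff)
qed

lemma Ai_bounded: "x \<ge> 0 \<Longrightarrow> \<bar>Ai x\<bar> \<le> Gn 0 / pi"
proof -
  assume x: "x \<ge> 0"
  have b: "\<bar>Phi x r\<bar> \<le> exp (- (r ^ 3 / 3))" if r: "r \<ge> 0" for r
  proof -
    have "\<bar>Im (om * exp (- (complex_of_real (x * r) * om)))\<bar> \<le> cmod (om * exp (- (complex_of_real (x * r) * om)))"
      by (rule abs_Im_le_cmod)
    also have "\<dots> = exp (- (x * r) * Re om)"
      unfolding om_def by (simp add: norm_mult norm_exp_eq_Re)
    also have "\<dots> \<le> 1"
    proof -
      have "Re om = 1/2" unfolding om_def by (simp add: cos_60)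
      then show ?thesis using x r by simp
    qed
    finally show ?thesis unfolding Phi_def by (simp add: abs_mult)
  qed
  have "\<bar>AiI x\<bar> \<le> Gn 0"
    unfolding AiI_def Gn_def set_lebesgue_integral_def
  proof (rule integral_abs_bound_integral)
    show "integrable lborel (\<lambda>r. indicat_real {0<..} r *\<^sub>R Phi x r)"
      using AiI_integrable[of x] unfolding set_integrable_def .
    show "integrable lborel (\<lambda>r::real. indicat_real {0<..} r *\<^sub>R (r ^ 0 * exp (- (r ^ 3 / 3))))"
      using Gn_aux(1)[of 0] unfolding set_integrable_def .
    fix r :: real
    show "\<bar>indicat_real {0<..} r *\<^sub>R Phi x r\<bar> \<le> indicat_real {0<..} r *\<^sub>R (r ^ 0 * exp (- (r ^ 3 / (3::real))))"
      using b[of r] by (auto simp: indicator_def)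
  qed
  then show ?thesis unfolding Ai_eq_AiI by (simp add: divide_right_mono)
qed


lemma Ai_D: "DERIV Ai x :> Aid x" by (rule Ai_deriv)

lemma Ai_meas[measurable]: "Ai \<in> borel_measurable borel"
  by (rule borel_measurable_continuous_onI) (rule continuous_on_Ai)
lemma Aid_meas[measurable]: "Aid \<in> borel_measurable borel"
  by (rule borel_measurable_continuous_onI) (rule continuous_on_Aid)
lemma Aid_D: "DERIV Aid x :> x * Ai x" by (rule Aid_deriv)

definition GG :: "real \<Rightarrow> real" where "GG t = (Ai t)\<^sup>2 + (Aid t)\<^sup>2"

lemma GG_D: "DERIV GG t :> 2 * Ai t * Aid t * (1 + t)"
  unfolding GG_def
  by (auto intro!: derivative_eq_intros Ai_D Aid_D simp: algebra_simps power2_eq_square)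

lemma GG_nonneg: "GG t \<ge> 0" unfolding GG_def by simp

lemma GG_deriv_bound: "\<bar>2 * Ai t * Aid t * (1 + t)\<bar> \<le> (1 + \<bar>t\<bar>) * GG t"
proof -
  have "\<bar>2 * Ai t * Aid t\<bar> \<le> GG t"
  proof -
    have "0 \<le> (\<bar>Ai t\<bar> - \<bar>Aid t\<bar>)\<^sup>2" by simp
    then show ?thesis unfolding GG_def by (simp add: abs_mult power2_eq_square algebra_simps)
  qed
  moreover have "\<bar>1 + t\<bar> \<le> 1 + \<bar>t\<bar>" by simp
  ultimately have "\<bar>2 * Ai t * Aid t\<bar> * \<bar>1 + t\<bar> \<le> GG t * (1 + \<bar>t\<bar>)"
    by (intro mult_mono) auto
  moreover have "\<bar>2 * Ai t * Aid t * (1 + t)\<bar> = \<bar>2 * Ai t * Aid t\<bar> * \<bar>1 + t\<bar>" by (rule abs_mult)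
  ultimately show ?thesis by (simp add: mult.commute)
qed

lemma gron_up:
  assumes ab: "a \<le> b" and K: "\<And>t. a \<le> t \<Longrightarrow> t \<le> b \<Longrightarrow> 1 + \<bar>t\<bar> \<le> K"
  shows "GG a * exp (K * a) \<le> GG b * exp (K * b)"
proof (rule DERIV_nonneg_imp_nondecreasing[OF ab])
  fix t assume t: "a \<le> t" "t \<le> b"
  have d: "DERIV (\<lambda>t. GG t * exp (K * t)) t :> (2 * Ai t * Aid t * (1 + t) + K * GG t) * exp (K * t)"
    by (auto intro!: derivative_eq_intros GG_D simp: algebra_simps)
  have "- (2 * Ai t * Aid t * (1 + t)) \<le> (1 + \<bar>t\<bar>) * GG t" using GG_deriv_bound[of t] by linarith
  also have "\<dots> \<le> K * GG t" using K[OF t] GG_nonneg[of t] by (intro mult_right_mono) auto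
  finally have "0 \<le> (2 * Ai t * Aid t * (1 + t) + K * GG t) * exp (K * t)" by simp
  with d show "\<exists>y. DERIV (\<lambda>t. GG t * exp (K * t)) t :> y \<and> 0 \<le> y" by blast
qed

lemma gron_down:
  assumes ab: "a \<le> b" and K: "\<And>t. a \<le> t \<Longrightarrow> t \<le> b \<Longrightarrow> 1 + \<bar>t\<bar> \<le> K"
  shows "GG b * exp (- K * b) \<le> GG a * exp (- K * a)"
proof (rule DERIV_nonpos_imp_nonincreasing[OF ab])
  fix t assume t: "a \<le> t" "t \<le> b"
  have d: "DERIV (\<lambda>t. GG t * exp (- K * t)) t :> (2 * Ai t * Aid t * (1 + t) - K * GG t) * exp (- K * t)"
    by (auto intro!: derivative_eq_intros GG_D simp: algebra_simps)
  have "2 * Ai t * Aid t * (1 + t) \<le> (1 + \<bar>t\<bar>) * GG t" using GG_deriv_bound[of t] by linarith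
  also have "\<dots> \<le> K * GG t" using K[OF t] GG_nonneg[of t] by (intro mult_right_mono) auto
  finally have "(2 * Ai t * Aid t * (1 + t) - K * GG t) * exp (- K * t) \<le> 0"
    by (simp add: mult_nonpos_nonneg)
  with d show "\<exists>y. DERIV (\<lambda>t. GG t * exp (- K * t)) t :> y \<and> y \<le> 0" by blast
qed

lemma GG_0: "GG 0 > 0" unfolding GG_def Ai_0 using A0_pos by (intro add_pos_nonneg) auto

lemma GG_pos: "GG a > 0"
proof (rule ccontr)
  assume "\<not> GG a > 0"
  then have z: "GG a = 0" using GG_nonneg[of a] by linarith
  show False
  proof (cases "a \<ge> 0")
    case True
    have "GG 0 * exp ((1 + a) * 0) \<le> GG a * exp ((1 + a) * a)"
      by (rule gron_up) (use True in auto)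
    then show False using z GG_0 by simp
  next
    case False
    have "GG 0 * exp (- (1 - a) * 0) \<le> GG a * exp (- (1 - a) * a)"
      by (rule gron_down) (use False in auto)
    then show False using z GG_0 by simp
  qed
qed

lemma no_double_zero: "Ai a = 0 \<Longrightarrow> Aid a \<noteq> 0"
  using GG_pos[of a] unfolding GG_def by auto

definition FF :: "real \<Rightarrow> real" where "FF t = Ai t * Aid t"

lemma FF_D: "DERIV FF t :> (Aid t)\<^sup>2 + t * (Ai t)\<^sup>2"
  unfolding FF_def
  by (auto intro!: derivative_eq_intros Ai_D Aid_D simp: algebra_simps power2_eq_square)

lemma Ai2_D: "DERIV (\<lambda>t. (Ai t)\<^sup>2) t :> 2 * FF t"
  unfolding FF_def by (auto intro!: derivative_eq_intros Ai_D simp: algebra_simps)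

lemma FF_mono: "0 \<le> a \<Longrightarrow> a \<le> b \<Longrightarrow> FF a \<le> FF b"
  by (rule DERIV_nonneg_imp_nondecreasing[of a b]) (auto intro!: exI FF_D)

definition BB :: real where "BB = Gn 0 / pi"

lemma Ai2_bound: "x \<ge> 0 \<Longrightarrow> (Ai x)\<^sup>2 \<le> BB\<^sup>2"
proof -
  assume "x \<ge> 0"
  then have "\<bar>Ai x\<bar> \<le> BB" unfolding BB_def by (rule Ai_bounded)
  then have "\<bar>Ai x\<bar>\<^sup>2 \<le> BB\<^sup>2" by (intro power_mono) auto
  then show ?thesis by simp
qed

lemma FF_le0: "x \<ge> 0 \<Longrightarrow> FF x \<le> 0"
proof (rule ccontr)
  assume x: "x \<ge> 0" and "\<not> FF x \<le> 0"
  then have c: "FF x > 0" by simp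
  define T where "T = x + (BB\<^sup>2 + 1) / (2 * FF x)"
  have xT: "x \<le> T" unfolding T_def using c by simp
  have "(Ai x)\<^sup>2 - 2 * FF x * x \<le> (Ai T)\<^sup>2 - 2 * FF x * T"
  proof (rule DERIV_nonneg_imp_nondecreasing[OF xT])
    fix t assume t: "x \<le> t" "t \<le> T"
    have "DERIV (\<lambda>t. (Ai t)\<^sup>2 - 2 * FF x * t) t :> 2 * FF t - 2 * FF x"
      by (auto intro!: derivative_eq_intros Ai_D simp: FF_def)
    moreover have "FF x \<le> FF t" using FF_mono x t by blast
    ultimately show "\<exists>y. DERIV (\<lambda>t. (Ai t)\<^sup>2 - 2 * FF x * t) t :> y \<and> 0 \<le> y" by force
  qed
  then have "(Ai T)\<^sup>2 \<ge> 2 * FF x * (T - x)"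
    using zero_le_power2[of "Ai x"] unfolding right_diff_distrib by linarith
  also have "2 * FF x * (T - x) = BB\<^sup>2 + 1" unfolding T_def using c by simp
  finally have "(Ai T)\<^sup>2 \<ge> BB\<^sup>2 + 1" .
  moreover have "(Ai T)\<^sup>2 \<le> BB\<^sup>2" using Ai2_bound x xT by simp
  ultimately show False by simp
qed

lemma FF_tendsto: "(FF \<longlongrightarrow> 0) at_top"
proof (rule increasing_tendsto)
  show "\<forall>\<^sub>F n in at_top. FF n \<le> 0"
    unfolding eventually_at_top_linorder using FF_le0 by blast
  fix e :: real assume e: "e < 0"
  show "\<forall>\<^sub>F n in at_top. e < FF n"
  proof (cases "\<exists>n0\<ge>0. e < FF n0")
    case True
    then obtain n0 where n0: "n0 \<ge> 0" "e < FF n0" by blast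
    show ?thesis unfolding eventually_at_top_linorder
      by (rule exI[of _ n0]) (use n0 FF_mono in fastforce)
  next
    case False
    then have le: "\<And>n. n \<ge> 0 \<Longrightarrow> FF n \<le> e" by force
    define T where "T = ((Ai 0)\<^sup>2 + 1) / (- 2 * e)"
    have T: "0 \<le> T" unfolding T_def using e by (simp add: divide_nonneg_neg)
    have "(Ai T)\<^sup>2 - 2 * e * T \<le> (Ai 0)\<^sup>2 - 2 * e * 0"
    proof (rule DERIV_nonpos_imp_nonincreasing[OF T])
      fix t assume t: "0 \<le> t" "t \<le> T"
      have "DERIV (\<lambda>t. (Ai t)\<^sup>2 - 2 * e * t) t :> 2 * FF t - 2 * e"
        by (auto intro!: derivative_eq_intros Ai_D simp: FF_def)
      moreover have "FF t \<le> e" using le t by blast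
      ultimately show "\<exists>y. DERIV (\<lambda>t. (Ai t)\<^sup>2 - 2 * e * t) t :> y \<and> y \<le> 0" by force
    qed
    moreover have "2 * e * T = - ((Ai 0)\<^sup>2 + 1)" unfolding T_def using e by simp
    ultimately have "(Ai T)\<^sup>2 \<le> -1" by simp
    moreover have "(Ai T)\<^sup>2 \<ge> 0" by simp
    ultimately show ?thesis by simp
  qed
qed

lemma Ai_pos_nonneg: "x \<ge> 0 \<Longrightarrow> Ai x > 0"
proof (rule ccontr)
  assume x: "x \<ge> 0" and "\<not> Ai x > 0"
  then have "Ai x \<le> 0" by simp
  moreover have "Ai 0 > 0" using Ai_0 A0_pos by simp
  ultimately obtain a where a: "0 \<le> a" "a \<le> x" "Ai a = 0"
    using IVT2[of Ai x 0 0] x continuous_on_Ai by (auto simp: continuous_at_imp_continuous_on isCont_Ai)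
  have F0: "FF a = 0" unfolding FF_def using a by simp
  have "FF (a + 1) \<ge> FF a" using FF_mono a by simp
  moreover have "FF (a + 1) \<le> 0" using FF_le0 a by simp
  ultimately have F1: "FF (a + 1) = 0" using F0 by simp
  obtain z where z: "a < z" "z < a + 1" "FF (a + 1) - FF a = (a + 1 - a) * ((Aid z)\<^sup>2 + z * (Ai z)\<^sup>2)"
    using MVT2[of a "a + 1" FF "\<lambda>t. (Aid t)\<^sup>2 + t * (Ai t)\<^sup>2"] FF_D by auto
  then have s: "(Aid z)\<^sup>2 + z * (Ai z)\<^sup>2 = 0" using F0 F1 by simp
  have "z * (Ai z)\<^sup>2 \<ge> 0" using z a by simp
  then have "(Aid z)\<^sup>2 = 0" "z * (Ai z)\<^sup>2 = 0" using s by (simp_all add: add_nonneg_eq_0_iff)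
  then have "GG z = 0" unfolding GG_def using z a by simp
  then show False using GG_pos[of z] by simp
qed

lemma Aid_nonpos: "x \<ge> 0 \<Longrightarrow> Aid x \<le> 0"
proof -
  assume x: "x \<ge> 0"
  have "Ai x * Aid x \<le> 0" using FF_le0[OF x] unfolding FF_def .
  then show ?thesis using Ai_pos_nonneg[OF x] by (simp add: mult_le_0_iff)
qed

lemma energy_integrable:
  shows "set_integrable lborel {0<..} (\<lambda>t. (Aid t)\<^sup>2 + t * (Ai t)\<^sup>2)"
    and "(LINT t:{0<..}|lborel. (Aid t)\<^sup>2 + t * (Ai t)\<^sup>2) = - FF 0"
proof -
  have cont: "isCont (\<lambda>t. (Aid t)\<^sup>2 + t * (Ai t)\<^sup>2) x" for x
    by (intro continuous_intros isCont_Ai isCont_Aid)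
  have A: "((FF \<circ> real_of_ereal) \<longlongrightarrow> FF 0) (at_right 0)"
  proof -
    have "isCont FF 0" using FF_D DERIV_isCont by blast
    then have "(FF \<longlongrightarrow> FF 0) (at_right 0)" by (simp add: isCont_def filterlim_at_split)
    then show ?thesis unfolding zero_ereal_def ereal_tendsto_simps .
  qed
  have B: "((FF \<circ> real_of_ereal) \<longlongrightarrow> 0) (at_left \<infinity>)"
    unfolding ereal_tendsto_simps by (rule FF_tendsto)
  note R = interval_integral_FTC_nonneg[where a=0 and b=\<infinity> and F=FF
      and f="\<lambda>t. (Aid t)\<^sup>2 + t * (Ai t)\<^sup>2", OF _ FF_D cont _ A B]
  have nn: "AE x in lborel. 0 < ereal x \<longrightarrow> ereal x < \<infinity> \<longrightarrow> 0 \<le> (Aid x)\<^sup>2 + x * (Ai x)\<^sup>2"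
    by (rule AE_I2) (auto simp: zero_ereal_def)
  show "set_integrable lborel {0<..} (\<lambda>t. (Aid t)\<^sup>2 + t * (Ai t)\<^sup>2)"
    using R(1)[OF _ nn] by (simp add: zero_ereal_def)
  show "(LINT t:{0<..}|lborel. (Aid t)\<^sup>2 + t * (Ai t)\<^sup>2) = - FF 0"
    using R(2)[OF _ nn] by (simp add: zero_ereal_def interval_integral_to_infinity_eq)
qed

lemma Aid2_int: "set_integrable lborel {0<..} (\<lambda>t. (Aid t)\<^sup>2)"
  by (rule set_integrable_bound[OF energy_integrable(1)]) 
     (auto simp: set_borel_measurable_def intro!: AE_I2)

lemma xAi2_int: "set_integrable lborel {0<..} (\<lambda>t. t * (Ai t)\<^sup>2)"
  by (rule set_integrable_bound[OF energy_integrable(1)]) 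
     (auto simp: set_borel_measurable_def intro!: AE_I2)

lemma Ai2_int: "set_integrable lborel {0<..} (\<lambda>t. (Ai t)\<^sup>2)"
proof -
  have "set_integrable lborel {0..1} (\<lambda>t. (Ai t)\<^sup>2)"
    by (rule borel_integrable_atLeastAtMost') (intro continuous_intros continuous_on_Ai)
  then have 1: "set_integrable lborel {0<..1} (\<lambda>t. (Ai t)\<^sup>2)"
    by (rule set_integrable_subset) auto
  have 2: "set_integrable lborel {1<..} (\<lambda>t. (Ai t)\<^sup>2)"
  proof (rule set_integrable_bound[OF set_integrable_subset[OF xAi2_int]])
    show "set_borel_measurable lborel {1<..} (\<lambda>t. (Ai t)\<^sup>2)"
      unfolding set_borel_measurable_def by measurable
    show "AE x in lborel. x \<in> {1<..} \<longrightarrow> norm ((Ai x)\<^sup>2) \<le> norm (x * (Ai x)\<^sup>2)"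
    proof (rule AE_I2, rule impI)
      fix x :: real assume "x \<in> {1<..}"
      then have "1 * (Ai x)\<^sup>2 \<le> x * (Ai x)\<^sup>2" by (intro mult_right_mono) auto
      then show "norm ((Ai x)\<^sup>2) \<le> norm (x * (Ai x)\<^sup>2)" by simp
    qed
  qed auto
  have "set_integrable lborel ({0<..1} \<union> {1<..}) (\<lambda>t. (Ai t)\<^sup>2)"
    by (rule set_integrable_Un[OF 1 2]) auto
  moreover have "{0<..1} \<union> {1<..} = ({0<..} :: real set)" by auto
  ultimately show ?thesis by simp
qed


lemma sturm_W_D:
  "DERIV (\<lambda>t. Ai t * cos (t - a) - Aid t * sin (t - a)) t :> - (1 + t) * Ai t * sin (t - a)"
  by (auto intro!: derivative_eq_intros Ai_D Aid_D simp: algebra_simps)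

lemma Ai_neg_zero: "\<exists>z. - 1 - pi \<le> z \<and> z \<le> - 1 \<and> Ai z = 0"
proof (rule ccontr)
  define a where "a = - 1 - pi"
  define W where "W t = Ai t * cos (t - a) - Aid t * sin (t - a)" for t
  assume "\<not> (\<exists>z. - 1 - pi \<le> z \<and> z \<le> - 1 \<and> Ai z = 0)"
  then have nz: "\<And>z. a \<le> z \<Longrightarrow> z \<le> a + pi \<Longrightarrow> Ai z \<noteq> 0" unfolding a_def by auto
  have ab: "a \<le> a + pi" by simp
  have sn: "0 \<le> sin (t - a)" if "a \<le> t" "t \<le> a + pi" for t
    using that by (intro sin_ge_zero) auto
  have t1: "- (1 + t) \<ge> 0" if "t \<le> a + pi" for t using that unfolding a_def by simp
  have Wa: "W a = Ai a" unfolding W_def by simp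
  have Wb: "W (a + pi) = - Ai (a + pi)" unfolding W_def by simp
  have ic: "\<forall>x. a \<le> x \<and> x \<le> a + pi \<longrightarrow> isCont Ai x" by (simp add: isCont_Ai)
  show False
  proof (cases "Ai a > 0")
    case True
    have pos: "Ai t > 0" if t: "a \<le> t" "t \<le> a + pi" for t
    proof (rule ccontr)
      assume "\<not> Ai t > 0"
      then obtain w where "a \<le> w" "w \<le> t" "Ai w = 0"
        using IVT2[of Ai t 0 a] True t ic by fastforce
      then show False using nz[of w] t by auto
    qed
    have "W a \<le> W (a + pi)"
    proof (rule DERIV_nonneg_imp_nondecreasing[OF ab])
      fix t assume t: "a \<le> t" "t \<le> a + pi"
      have "0 \<le> - (1 + t) * Ai t * sin (t - a)"
        using t1[OF t(2)] pos[OF t] sn[OF t] by simp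
      then show "\<exists>y. DERIV W t :> y \<and> 0 \<le> y" unfolding W_def using sturm_W_D by blast
    qed
    then show False using Wa Wb True pos[of "a + pi"] by simp
  next
    case False
    then have neg0: "Ai a < 0" using nz[of a] by force
    have neg: "Ai t < 0" if t: "a \<le> t" "t \<le> a + pi" for t
    proof (rule ccontr)
      assume "\<not> Ai t < 0"
      then obtain w where "a \<le> w" "w \<le> t" "Ai w = 0"
        using IVT[of Ai a 0 t] neg0 t ic by fastforce
      then show False using nz[of w] t by auto
    qed
    have "W (a + pi) \<le> W a"
    proof (rule DERIV_nonpos_imp_nonincreasing[OF ab])
      fix t assume t: "a \<le> t" "t \<le> a + pi"
      have "- (1 + t) * Ai t * sin (t - a) \<le> 0"
      proof -
        have "- (1 + t) * sin (t - a) \<ge> 0" using t1[OF t(2)] sn[OF t] by simp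
        then have "(- (1 + t) * sin (t - a)) * Ai t \<le> 0" using neg[OF t]
          by (simp add: mult_nonneg_nonpos)
        then show ?thesis by (simp add: algebra_simps)
      qed
      then show "\<exists>y. DERIV W t :> y \<and> y \<le> 0" unfolding W_def using sturm_W_D by blast
    qed
    then show False using Wa Wb neg0 neg[of "a + pi"] by simp
  qed
qed

definition Zs :: "real set" where "Zs = {-1-pi..0} \<inter> {z. Ai z = 0}"

lemma Zs_compact: "compact Zs"
  unfolding Zs_def
  by (intro compact_Int_closed compact_Icc closed_Collect_eq continuous_on_Ai continuous_on_const)

lemma Zs_nonempty: "Zs \<noteq> {}"
  using Ai_neg_zero unfolding Zs_def by force

definition zm :: real where "zm = (SOME s. s \<in> Zs \<and> (\<forall>t\<in>Zs. t \<le> s))"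

lemma zm_props: "zm \<in> Zs" "\<And>t. t \<in> Zs \<Longrightarrow> t \<le> zm"
proof -
  have "\<exists>s\<in>Zs. \<forall>t\<in>Zs. t \<le> s" by (rule compact_attains_sup[OF Zs_compact Zs_nonempty])
  then have "zm \<in> Zs \<and> (\<forall>t\<in>Zs. t \<le> zm)" unfolding zm_def by (rule someI_ex[where P="\<lambda>s. s \<in> Zs \<and> (\<forall>t\<in>Zs. t \<le> s)", OF bexE]) auto
  then show "zm \<in> Zs" "\<And>t. t \<in> Zs \<Longrightarrow> t \<le> zm" by auto
qed

lemma zero_neg: "Ai z = 0 \<Longrightarrow> z < 0"
  using Ai_pos_nonneg[of z] by force

lemma P_zm: "- zm > 0 \<and> Ai (- (- zm)) = 0 \<and> (\<forall>z. Ai z = 0 \<longrightarrow> - zm \<le> \<bar>z\<bar>)"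
proof (intro conjI allI impI)
  have zmZ: "-1-pi \<le> zm" "zm \<le> 0" "Ai zm = 0" using zm_props(1) unfolding Zs_def by auto
  show "- zm > 0" using zero_neg[OF zmZ(3)] by simp
  show "Ai (- (- zm)) = 0" using zmZ by simp
  fix z assume z: "Ai z = 0"
  have zn: "z < 0" by (rule zero_neg[OF z])
  show "- zm \<le> \<bar>z\<bar>"
  proof (cases "z \<ge> -1-pi")
    case True
    then have "z \<in> Zs" unfolding Zs_def using z zn by auto
    then have "z \<le> zm" by (rule zm_props(2))
    then show ?thesis using zn by simp
  next
    case False
    then show ?thesis using zmZ(1) zn by simp
  qed
qed

lemma x0_eq: "x0 = - zm"
  unfolding x0_def
proof (rule the_equality)
  show "- zm > 0 \<and> Ai (- (- zm)) = 0 \<and> (\<forall>z. Ai z = 0 \<longrightarrow> - zm \<le> \<bar>z\<bar>)" by (rule P_zm)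
  fix a assume a: "0 < a \<and> Ai (- a) = 0 \<and> (\<forall>z. Ai z = 0 \<longrightarrow> a \<le> \<bar>z\<bar>)"
  have "a \<le> \<bar>zm\<bar>" using a zm_props(1) unfolding Zs_def by auto
  moreover have "- zm \<le> \<bar>- a\<bar>" using P_zm a by blast
  moreover have "zm < 0" using P_zm by simp
  ultimately show "a = - zm" using a by simp
qed

lemma x0_pos: "x0 > 0" and Ai_x0: "Ai (- x0) = 0" and x0_min: "Ai z = 0 \<Longrightarrow> x0 \<le> \<bar>z\<bar>"
  using P_zm unfolding x0_eq by auto

lemma Ai_pos_right: "z > - x0 \<Longrightarrow> Ai z > 0"
proof (rule ccontr)
  assume z: "z > - x0" and "\<not> Ai z > 0"
  show False
  proof (cases "z \<ge> 0")
    case True then show False using Ai_pos_nonneg \<open>\<not> Ai z > 0\<close> by blast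
  next
    case False
    have "Ai z \<le> 0" using \<open>\<not> Ai z > 0\<close> by simp
    moreover have "Ai 0 > 0" using Ai_pos_nonneg by simp
    ultimately obtain w where w: "z \<le> w" "w \<le> 0" "Ai w = 0"
      using IVT[of Ai z 0 0] False by (force simp: isCont_Ai)
    have "x0 \<le> \<bar>w\<bar>" by (rule x0_min[OF w(3)])
    then show False using w z by simp
  qed
qed

lemma Aid_x0: "Aid (- x0) \<noteq> 0" using no_double_zero[OF Ai_x0] .


lemma scale_set:
  fixes h :: "real \<Rightarrow> real"
  assumes l: "l > 0" and hi: "set_integrable lborel {-x0..} h"
  shows "set_integrable lborel {0..} (\<lambda>x. h (l * x - x0))"
    and "(LINT x:{0..}|lborel. h (l * x - x0)) = (LINT u:{-x0..}|lborel. h u) / l"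
proof -
  define g where "g u = indicator {-x0..} u * h u" for u
  have gi: "integrable lborel g" using hi unfolding set_integrable_def g_def by simp
  have e: "indicator {0..} x * h (l * x - x0) = g (- x0 + l * x)" for x
    using l unfolding g_def by (auto simp: indicator_def algebra_simps zero_le_mult_iff)
  have "integrable lborel (\<lambda>x. g (- x0 + l * x))"
    using gi l by (subst lborel_integrable_real_affine_iff) auto
  then show "set_integrable lborel {0..} (\<lambda>x. h (l * x - x0))"
    unfolding set_integrable_def using e by simp
  have "integral\<^sup>L lborel g = \<bar>l\<bar> *\<^sub>R integral\<^sup>L lborel (\<lambda>x. g (- x0 + l * x))"
    using l by (intro lborel_integral_real_affine) auto
  then have 1: "integral\<^sup>L lborel (\<lambda>x. g (- x0 + l * x)) = integral\<^sup>L lborel g / l"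
    using l by simp
  have 2: "(LINT x:{0..}|lborel. h (l * x - x0)) = integral\<^sup>L lborel (\<lambda>x. g (- x0 + l * x))"
    unfolding set_lebesgue_integral_def real_scaleR_def by (simp only: e)
  have 3: "(LINT u:{-x0..}|lborel. h u) = integral\<^sup>L lborel g"
    unfolding set_lebesgue_integral_def real_scaleR_def g_def by simp
  show "(LINT x:{0..}|lborel. h (l * x - x0)) = (LINT u:{-x0..}|lborel. h u) / l"
    unfolding 2 3 1 ..
qed

lemma split_base:
  fixes f :: "real \<Rightarrow> real"
  assumes c: "continuous_on UNIV f" and i: "set_integrable lborel {0<..} f"
  shows "set_integrable lborel {-x0..} f"
proof -
  have 1: "set_integrable lborel {-x0..0} f"
    by (rule borel_integrable_atLeastAtMost', rule continuous_on_subset[OF c]) auto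
  have "set_integrable lborel ({-x0..0} \<union> {0<..}) f"
    by (rule set_integrable_Un[OF 1 i]) auto
  moreover have "{-x0..0} \<union> {0<..} = {-x0..}" using x0_pos by auto
  ultimately show ?thesis by simp
qed

lemma NBi: "set_integrable lborel {-x0..} (\<lambda>u. (Ai u)\<^sup>2)"
  by (rule split_base[OF _ Ai2_int]) (intro continuous_intros continuous_on_Ai)

lemma TBi: "set_integrable lborel {-x0..} (\<lambda>u. (Aid u)\<^sup>2)"
  by (rule split_base[OF _ Aid2_int]) (intro continuous_intros continuous_on_Aid)

lemma uBi: "set_integrable lborel {-x0..} (\<lambda>u. u * (Ai u)\<^sup>2)"
  by (rule split_base[OF _ xAi2_int]) (intro continuous_intros continuous_on_Ai)

lemma MBi: "set_integrable lborel {-x0..} (\<lambda>u. (u + x0) * (Ai u)\<^sup>2)"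
proof -
  have "set_integrable lborel {-x0..} (\<lambda>u. u * (Ai u)\<^sup>2 + x0 * (Ai u)\<^sup>2)"
    by (intro set_integral_add uBi set_integrable_mult_right NBi)
  then show ?thesis by (simp add: algebra_simps)
qed

definition NB where "NB = (LINT u:{-x0..}|lborel. (Ai u)\<^sup>2)"
definition MB where "MB = (LINT u:{-x0..}|lborel. (u + x0) * (Ai u)\<^sup>2)"
definition TB where "TB = (LINT u:{-x0..}|lborel. (Aid u)\<^sup>2)"

lemma energy_identity: "TB + MB = x0 * NB"
proof -
  have cont: "isCont (\<lambda>t. (Aid t)\<^sup>2 + t * (Ai t)\<^sup>2) x" for x
    by (intro continuous_intros isCont_Ai isCont_Aid)
  have int: "set_integrable lborel {-x0..} (\<lambda>t. (Aid t)\<^sup>2 + t * (Ai t)\<^sup>2)"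
    by (intro set_integral_add TBi uBi)
  then have int': "set_integrable lborel (einterval (ereal (-x0)) \<infinity>) (\<lambda>t. (Aid t)\<^sup>2 + t * (Ai t)\<^sup>2)"
    by (rule set_integrable_subset) auto
  have A: "((FF \<circ> real_of_ereal) \<longlongrightarrow> FF (-x0)) (at_right (ereal (-x0)))"
  proof -
    have "isCont FF (-x0)" using FF_D DERIV_isCont by blast
    then have "(FF \<longlongrightarrow> FF (-x0)) (at_right (-x0))" by (simp add: isCont_def filterlim_at_split)
    then show ?thesis unfolding ereal_tendsto_simps .
  qed
  have B: "((FF \<circ> real_of_ereal) \<longlongrightarrow> 0) (at_left \<infinity>)"
    unfolding ereal_tendsto_simps by (rule FF_tendsto)
  have "(LBINT t=ereal (-x0)..\<infinity>. (Aid t)\<^sup>2 + t * (Ai t)\<^sup>2) = 0 - FF (-x0)"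
    by (rule interval_integral_FTC_integrable[OF _ _ _ int' A B])
       (auto simp: has_real_derivative_iff_has_vector_derivative[symmetric] FF_D cont)
  also have "FF (-x0) = 0" unfolding FF_def using Ai_x0 by simp
  finally have "(LINT t:{-x0<..}|lborel. (Aid t)\<^sup>2 + t * (Ai t)\<^sup>2) = 0"
    by (simp add: interval_integral_to_infinity_eq)
  moreover have "(LINT t:{-x0<..}|lborel. (Aid t)\<^sup>2 + t * (Ai t)\<^sup>2) = (LINT t:{-x0..}|lborel. (Aid t)\<^sup>2 + t * (Ai t)\<^sup>2)"
  proof (rule set_integral_cong_set)
    show "set_borel_measurable lborel {-x0<..} (\<lambda>t. (Aid t)\<^sup>2 + t * (Ai t)\<^sup>2)"
      unfolding set_borel_measurable_def by measurable
    show "set_borel_measurable lborel {-x0..} (\<lambda>t. (Aid t)\<^sup>2 + t * (Ai t)\<^sup>2)"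
      unfolding set_borel_measurable_def by measurable
    show "AE x in lborel. (x \<in> {-x0..}) = (x \<in> {-x0<..})"
      using AE_lborel_singleton[of "-x0"] by eventually_elim auto
  qed
  moreover have "(LINT t:{-x0..}|lborel. (Aid t)\<^sup>2 + t * (Ai t)\<^sup>2) = TB + MB - x0 * NB"
  proof -
    have "(LINT t:{-x0..}|lborel. (Aid t)\<^sup>2 + t * (Ai t)\<^sup>2)
        = (LINT t:{-x0..}|lborel. (Aid t)\<^sup>2 + (t + x0) * (Ai t)\<^sup>2 - x0 * (Ai t)\<^sup>2)"
      by (simp add: algebra_simps)
    also have "\<dots> = TB + MB - x0 * NB"
    proof -
      have i1: "set_integrable lborel {-x0..} (\<lambda>t. (Aid t)\<^sup>2 + (t + x0) * (Ai t)\<^sup>2)"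
        by (rule set_integral_add(1)[OF TBi MBi])
      have i2: "set_integrable lborel {-x0..} (\<lambda>t. x0 * (Ai t)\<^sup>2)" using NBi by simp
      have "(LINT t:{-x0..}|lborel. (Aid t)\<^sup>2 + (t + x0) * (Ai t)\<^sup>2 - x0 * (Ai t)\<^sup>2)
          = (LINT t:{-x0..}|lborel. (Aid t)\<^sup>2 + (t + x0) * (Ai t)\<^sup>2) - (LINT t:{-x0..}|lborel. x0 * (Ai t)\<^sup>2)"
        by (rule set_integral_diff(2)[OF i1 i2])
      also have "(LINT t:{-x0..}|lborel. (Aid t)\<^sup>2 + (t + x0) * (Ai t)\<^sup>2) = TB + MB"
        unfolding TB_def MB_def by (rule set_integral_add(2)[OF TBi MBi])
      also have "(LINT t:{-x0..}|lborel. x0 * (Ai t)\<^sup>2) = x0 * NB"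
        unfolding NB_def by simp
      finally show ?thesis .
    qed
    finally show ?thesis .
  qed
  ultimately show ?thesis by simp
qed

lemma pos_int:
  fixes f :: "real \<Rightarrow> real"
  assumes c: "continuous_on UNIV f" and nn: "\<And>u. u \<ge> -x0 \<Longrightarrow> f u \<ge> 0"
    and pos: "\<And>u. 0 \<le> u \<Longrightarrow> u \<le> 1 \<Longrightarrow> f u > 0"
    and i: "set_integrable lborel {-x0..} f"
  shows "(LINT u:{-x0..}|lborel. f u) > 0"
proof -
  obtain s where s: "s \<in> {0..1}" "\<And>t. t \<in> {0..1} \<Longrightarrow> f s \<le> f t"
    using continuous_attains_inf[of "{0..1::real}" f] continuous_on_subset[OF c] by auto
  define m0 where "m0 = f s"
  have m0: "m0 > 0" unfolding m0_def using pos s by auto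
  have "(LINT u:{-x0..}|lborel. f u) \<ge> integral\<^sup>L lborel (\<lambda>u::real. indicator {0..1} u * m0)"
    unfolding set_lebesgue_integral_def
  proof (rule Bochner_Integration.integral_mono)
    show "integrable lborel (\<lambda>u::real. indicator {0..1} u * m0)"
      by (intro integrable_mult_left integrable_real_indicator) auto
    show "integrable lborel (\<lambda>x. indicat_real {- x0..} x *\<^sub>R f x)"
      using i unfolding set_integrable_def .
    fix u :: real
    show "indicator {0..1} u * m0 \<le> indicat_real {- x0..} u *\<^sub>R f u"
      using s(2)[of u] x0_pos nn[of u] unfolding m0_def by (auto simp: indicator_def)
  qed
  also have "integral\<^sup>L lborel (\<lambda>u::real. indicator {0..1} u * m0) = m0"
    by simp
  finally show ?thesis using m0 by simp
qed

lemma NB_pos: "NB > 0"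
  unfolding NB_def
proof (rule pos_int[OF _ _ _ NBi])
  show "continuous_on UNIV (\<lambda>u. (Ai u)\<^sup>2)" by (intro continuous_intros continuous_on_Ai)
  show "0 \<le> (Ai u)\<^sup>2" for u by simp
  show "0 < (Ai u)\<^sup>2" if "0 \<le> u" "u \<le> 1" for u using that Ai_pos_nonneg[of u] by simp
qed

lemma MB_pos: "MB > 0"
  unfolding MB_def
proof (rule pos_int[OF _ _ _ MBi])
  show "continuous_on UNIV (\<lambda>u. (u + x0) * (Ai u)\<^sup>2)" by (intro continuous_intros continuous_on_Ai)
  show "0 \<le> (u + x0) * (Ai u)\<^sup>2" if "- x0 \<le> u" for u using that by simp
  show "0 < (u + x0) * (Ai u)\<^sup>2" if "0 \<le> u" "u \<le> 1" for u
    using that x0_pos Ai_pos_nonneg[of u] by simp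
qed

lemma TB_nonneg: "TB \<ge> 0"
  unfolding TB_def set_lebesgue_integral_def by (rule integral_nonneg_AE) auto

lemma deriv_shift: "deriv (\<lambda>y. Ai (y - x0)) x = Aid (x - x0)"
proof (rule DERIV_imp_deriv)
  have "((\<lambda>y. Ai (y - x0)) has_real_derivative Aid (x - x0) * 1) (at x)"
    by (rule DERIV_chain2[where f=Ai, OF Ai_D]) (auto intro!: derivative_eq_intros)
  then show "((\<lambda>y. Ai (y - x0)) has_real_derivative Aid (x - x0)) (at x)" by simp
qed

lemma N0_eq: "(LINT x:{0..}|lborel. (Ai (x - x0))\<^sup>2) = NB"
  using scale_set(2)[of 1 "\<lambda>u. (Ai u)\<^sup>2", OF _ NBi] unfolding NB_def by simp

lemma Cbar_eq: "Cbar = 1 / NB" unfolding Cbar_def N0_eq ..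

lemma C1_eq: "C1 = MB"
proof -
  have "(LINT x:{0..}|lborel. (1 * x - x0 + x0) * (Ai (1 * x - x0))\<^sup>2) = MB / 1"
    using scale_set(2)[of 1 "\<lambda>u. (u + x0) * (Ai u)\<^sup>2", OF _ MBi] unfolding MB_def by simp
  then show ?thesis unfolding C1_def by simp
qed

lemma C2_eq: "C2 = TB"
proof -
  have "(LINT x:{0..}|lborel. (Aid (1 * x - x0))\<^sup>2) = TB / 1"
    using scale_set(2)[of 1 "\<lambda>u. (Aid u)\<^sup>2", OF _ TBi] unfolding TB_def by simp
  then show ?thesis unfolding C2_def deriv_shift by simp
qed

lemma eta2_eq: "eta2 = MB\<^sup>2 * TB / NB ^ 3"
  unfolding eta2_def Cbar_eq C1_eq C2_eq by (simp add: field_simps power2_eq_square)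


lemma continuous_on_Ai_comp[continuous_intros]: "continuous_on S f \<Longrightarrow> continuous_on S (\<lambda>x. Ai (f x))"
  by (rule continuous_on_compose2[OF continuous_on_Ai]) auto
lemma continuous_on_Aid_comp[continuous_intros]: "continuous_on S f \<Longrightarrow> continuous_on S (\<lambda>x. Aid (f x))"
  by (rule continuous_on_compose2[OF continuous_on_Aid]) auto

lemma Cbar_pos: "Cbar > 0" unfolding Cbar_eq using NB_pos by simp
lemma C1_pos: "C1 > 0" unfolding C1_eq using MB_pos by simp

lemma profile:
  fixes m :: real
  assumes m: "m > 0"
  shows "\<exists>c :: complex. \<exists>g.
            D1 (\<lambda>x. c * complex_of_real (Ai ((Cbar * C1 / m) * x - x0))) g
          \<and> moment (\<lambda>x. c * complex_of_real (Ai ((Cbar * C1 / m) * x - x0))) = m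
          \<and> defect g = eta2 / m\<^sup>2"
proof -
  define l where "l = Cbar * C1 / m"
  have l: "l > 0" unfolding l_def using Cbar_pos C1_pos m by simp
  have l_eq: "l = MB / (NB * m)" unfolding l_def Cbar_eq C1_eq by simp
  define k where "k = sqrt (l * Cbar)"
  have k: "k > 0" unfolding k_def using l Cbar_pos by simp
  have k2: "k\<^sup>2 = l / NB" unfolding k_def using l Cbar_pos by (simp add: Cbar_eq)
  define psi where "psi x = complex_of_real k * complex_of_real (Ai (l * x - x0))" for x
  define g where "g x = complex_of_real (k * l * Aid (l * x - x0))" for x
  have psi2: "(cmod (psi x))\<^sup>2 = k\<^sup>2 * (Ai (l * x - x0))\<^sup>2" for x
    unfolding psi_def norm_mult norm_of_real by (simp add: power_mult_distrib)
  have g2: "(cmod (g x))\<^sup>2 = (k * l)\<^sup>2 * (Aid (l * x - x0))\<^sup>2" for x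
    unfolding g_def norm_of_real by (simp add: power_mult_distrib)
  have xpsi2: "x * (cmod (psi x))\<^sup>2 = (k\<^sup>2 / l) * ((l * x - x0) + x0) * (Ai (l * x - x0))\<^sup>2" for x
    unfolding psi2 using l by (simp add: field_simps)
  note S1 = scale_set[OF l, of "\<lambda>u. k\<^sup>2 * (Ai u)\<^sup>2"]
  note S2 = scale_set[OF l, of "\<lambda>u. (k * l)\<^sup>2 * (Aid u)\<^sup>2"]
  note S3 = scale_set[OF l, of "\<lambda>u. (k\<^sup>2 / l) * (u + x0) * (Ai u)\<^sup>2"]
  have i1: "set_integrable lborel {-x0..} (\<lambda>u. k\<^sup>2 * (Ai u)\<^sup>2)" using NBi by simp
  have i2: "set_integrable lborel {-x0..} (\<lambda>u. (k * l)\<^sup>2 * (Aid u)\<^sup>2)" using TBi by simp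
  have i3: "set_integrable lborel {-x0..} (\<lambda>u. (k\<^sup>2 / l) * (u + x0) * (Ai u)\<^sup>2)"
    using MBi by (simp add: mult.assoc)
  have H1: "H1_0 psi g"
    unfolding H1_0_def
  proof (intro conjI allI impI)
    show "g \<in> borel_measurable lborel" unfolding g_def by measurable
    fix x :: real assume x: "0 \<le> x"
    have cg: "continuous_on {0..x} g" unfolding g_def by (intro continuous_intros)
    show "set_integrable lborel {0..x} g" by (rule borel_integrable_atLeastAtMost'[OF cg])
    have "(LBINT t=ereal 0..ereal x. g t) = complex_of_real (k * Ai (l * x - x0)) - complex_of_real (k * Ai (l * 0 - x0))"
    proof (rule interval_integral_FTC_finite)
      show "continuous_on {min 0 x..max 0 x} g" unfolding g_def by (intro continuous_intros)
      fix t
      have "((\<lambda>t. k * Ai (l * t - x0)) has_real_derivative (k * (Aid (l * t - x0) * l))) (at t)"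
        by (intro DERIV_cmult DERIV_chain2[where f=Ai, OF Ai_D]) (auto intro!: derivative_eq_intros)
      then have "((\<lambda>t. complex_of_real (k * Ai (l * t - x0))) has_vector_derivative complex_of_real (k * (Aid (l * t - x0) * l))) (at t)"
        by (rule has_vector_derivative_of_real)
      then show "((\<lambda>t. complex_of_real (k * Ai (l * t - x0))) has_vector_derivative g t) (at t within {min 0 x..max 0 x})"
        unfolding g_def by (auto intro: has_vector_derivative_at_within simp: algebra_simps)
    qed
    then show "psi x = (LINT t:{0..x}|lborel. g t)"
      using x Ai_x0 unfolding psi_def by (simp add: interval_integral_Icc zero_ereal_def)
  next
    show "set_integrable lborel {0..} (\<lambda>x. (cmod (psi x))\<^sup>2)"
      unfolding psi2 using S1(1)[OF i1] .
    show "set_integrable lborel {0..} (\<lambda>x. (cmod (g x))\<^sup>2)"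
      unfolding g2 using S2(1)[OF i2] .
  qed
  have N: "(LINT x:{0..}|lborel. (cmod (psi x))\<^sup>2) = 1"
  proof -
    have "(LINT x:{0..}|lborel. (cmod (psi x))\<^sup>2) = (LINT u:{-x0..}|lborel. k\<^sup>2 * (Ai u)\<^sup>2) / l"
      unfolding psi2 by (rule S1(2)[OF i1])
    also have "\<dots> = k\<^sup>2 * NB / l" unfolding NB_def by simp
    also have "\<dots> = 1" using k2 l NB_pos by simp
    finally show ?thesis .
  qed
  have Mi: "set_integrable lborel {0..} (\<lambda>x. x * (cmod (psi x))\<^sup>2)"
    unfolding xpsi2 using S3(1)[OF i3] .
  have M: "moment psi = m"
  proof -
    have "moment psi = (LINT u:{-x0..}|lborel. (k\<^sup>2 / l) * (u + x0) * (Ai u)\<^sup>2) / l"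
      unfolding moment_def xpsi2 by (rule S3(2)[OF i3])
    also have "\<dots> = (k\<^sup>2 / l) * MB / l" unfolding MB_def by (simp add: mult.assoc)
    also have "\<dots> = m" unfolding k2 l_eq using NB_pos MB_pos m by (simp add: field_simps power2_eq_square)
    finally show ?thesis .
  qed
  have T: "defect g = eta2 / m\<^sup>2"
  proof -
    have "defect g = (LINT u:{-x0..}|lborel. (k * l)\<^sup>2 * (Aid u)\<^sup>2) / l"
      unfolding defect_def g2 by (rule S2(2)[OF i2])
    also have "\<dots> = (k * l)\<^sup>2 * TB / l" unfolding TB_def by simp
    also have "\<dots> = eta2 / m\<^sup>2"
      unfolding eta2_eq power_mult_distrib k2 using NB_pos MB_pos m l
      by (simp add: l_eq field_simps power2_eq_square power3_eq_cube)
    finally show ?thesis .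
  qed
  have "D1 psi g" unfolding D1_def using H1 N Mi by simp
  then show ?thesis using M T unfolding psi_def l_def by blast
qed


lemma P_cont:
  fixes p :: "real \<Rightarrow> real"
  assumes pi: "set_integrable lborel {a..b} p"
  shows "continuous_on {a..b} (\<lambda>t. LINT s:{a..t}|lborel. p s)"
proof -
  have "p integrable_on {a..b}" using set_borel_integral_eq_integral(1)[OF pi] .
  then have c: "continuous_on {a..b} (\<lambda>x. integral {a..x} p)"
    by (rule indefinite_integral_continuous_1)
  show ?thesis
  proof (rule continuous_on_eq[OF c])
    fix t assume t: "t \<in> {a..b}"
    have "set_integrable lborel {a..t} p" by (rule set_integrable_subset[OF pi]) (use t in auto)
    then show "integral {a..t} p = (LINT s:{a..t}|lborel. p s)"
      using set_borel_integral_eq_integral(2) by metis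
  qed
qed

lemma bounded_times_integrable:
  fixes q P :: "real \<Rightarrow> real"
  assumes qi: "set_integrable lborel {a..b} q" and P: "continuous_on {a..b} P"
  shows "set_integrable lborel {a..b} (\<lambda>t. q t * P t)"
proof -
  obtain C where C: "\<And>t. t \<in> {a..b} \<Longrightarrow> \<bar>P t\<bar> \<le> C"
  proof -
    have "compact (P ` {a..b})" by (rule compact_continuous_image[OF P compact_Icc])
    then have "bounded (P ` {a..b})" by (rule compact_imp_bounded)
    then obtain C where "\<And>y. y \<in> P ` {a..b} \<Longrightarrow> norm y \<le> C" by (auto simp: bounded_iff)
    then show ?thesis using that by force
  qed
  show ?thesis
  proof (rule set_integrable_bound[where f="\<lambda>t. q t * C"])
    show "set_integrable lborel {a..b} (\<lambda>t. q t * C)" using qi by simp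
    have m1: "(\<lambda>x. indicat_real {a..b} x * q x) \<in> borel_measurable lborel"
      using borel_measurable_integrable[OF qi[unfolded set_integrable_def]] by simp
    have m2: "(\<lambda>x. indicat_real {a..b} x *\<^sub>R P x) \<in> borel_measurable borel"
      by (rule borel_measurable_continuous_on_indicator[OF _ P]) auto
    then have m2': "(\<lambda>x. indicat_real {a..b} x * P x) \<in> borel_measurable lborel" by simp
    have "(\<lambda>x. (indicat_real {a..b} x * q x) * (indicat_real {a..b} x * P x)) \<in> borel_measurable lborel"
      using m1 m2' by measurable
    moreover have "(\<lambda>x. indicat_real {a..b} x *\<^sub>R (q x * P x)) = (\<lambda>x. (indicat_real {a..b} x * q x) * (indicat_real {a..b} x * P x))"
      by (auto simp: indicator_def fun_eq_iff)
    ultimately show "set_borel_measurable lborel {a..b} (\<lambda>t. q t * P t)"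
      unfolding set_borel_measurable_def by simp
    show "AE x in lborel. x \<in> {a..b} \<longrightarrow> norm (q x * P x) \<le> norm (q x * C)"
    proof (rule AE_I2, rule impI)
      fix x assume x: "x \<in> {a..b}"
      have "\<bar>q x\<bar> * \<bar>P x\<bar> \<le> \<bar>q x\<bar> * C" using C[OF x] by (intro mult_left_mono) auto
      moreover have "C \<ge> 0" using C[OF x] by linarith
      ultimately show "norm (q x * P x) \<le> norm (q x * C)" by (simp add: abs_mult)
    qed
  qed
qed

lemma split_at:
  fixes p :: "real \<Rightarrow> real"
  assumes pi: "set_integrable lborel {a..b} p" and t: "a \<le> t" "t \<le> b"
  shows "(LINT s:{a..t}|lborel. p s) + (LINT s:{t..b}|lborel. p s) = (LINT s:{a..b}|lborel. p s)"
proof -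
  have ii: "interval_lebesgue_integrable lborel (min (ereal a) (min (ereal t) (ereal b))) (max (ereal a) (max (ereal t) (ereal b))) p"
  proof -
    have "min (ereal a) (min (ereal t) (ereal b)) = ereal a" "max (ereal a) (max (ereal t) (ereal b)) = ereal b"
      using t by (auto simp: min_def max_def)
    moreover have "set_integrable lborel {a<..<b} p" by (rule set_integrable_subset[OF pi]) auto
    ultimately show ?thesis using t unfolding interval_lebesgue_integrable_def by auto
  qed
  have "(LBINT s=ereal a..ereal t. p s) + (LBINT s=ereal t..ereal b. p s) = (LBINT s=ereal a..ereal b. p s)"
    by (rule interval_integral_sum[OF ii])
  then show ?thesis using t by (simp add: interval_integral_Icc)
qed

lemma fubini_swap:
  fixes p q :: "real \<Rightarrow> real"
  assumes pi: "set_integrable lborel {a..b} p" and qi: "set_integrable lborel {a..b} q"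
  shows "(LINT t:{a..b}|lborel. p t * (LINT s:{a..t}|lborel. q s))
       = (LINT s:{a..b}|lborel. q s * (LINT t:{s..b}|lborel. p t))"
proof -
  define P' where "P' t = indicator {a..b} t * p t" for t
  define Q' where "Q' s = indicator {a..b} s * q s" for s
  have P'i: "integrable lborel P'" using pi unfolding set_integrable_def P'_def by simp
  have Q'i: "integrable lborel Q'" using qi unfolding set_integrable_def Q'_def by simp
  have [measurable]: "P' \<in> borel_measurable lborel" "Q' \<in> borel_measurable lborel"
    using P'i Q'i by auto
  then have [measurable]: "P' \<in> borel_measurable borel" "Q' \<in> borel_measurable borel" by auto
  define f where "f t s = (if s \<le> t then P' t * Q' s else 0)" for t s :: real
  have fm: "(\<lambda>(t, s). f t s) \<in> borel_measurable (lborel \<Otimes>\<^sub>M lborel)"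
    unfolding f_def by measurable
  have fint: "integrable (lborel \<Otimes>\<^sub>M lborel) (\<lambda>(t, s). f t s)"
  proof (rule lborel_pair.Fubini_integrable)
    show "(\<lambda>(t, s). f t s) \<in> borel_measurable (lborel \<Otimes>\<^sub>M lborel)" by (rule fm)
    show "AE x in lborel. integrable lborel (\<lambda>y. case (x, y) of (t, s) \<Rightarrow> f t s)"
    proof (rule AE_I2)
      fix t :: real
      have "integrable lborel (\<lambda>s. indicator {..t} s *\<^sub>R (P' t * Q' s))"
        by (rule integrable_mult_indicator) (use Q'i in auto)
      moreover have "(\<lambda>y. case (t, y) of (t, s) \<Rightarrow> f t s) = (\<lambda>s. indicator {..t} s *\<^sub>R (P' t * Q' s))"
        unfolding f_def by (auto simp: fun_eq_iff indicator_def)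
      ultimately show "integrable lborel (\<lambda>y. case (t, y) of (t, s) \<Rightarrow> f t s)" by simp
    qed
    show "integrable lborel (\<lambda>x. LINT y|lborel. norm (case (x, y) of (t, s) \<Rightarrow> f t s))"
    proof (rule Bochner_Integration.integrable_bound[where f="\<lambda>t. \<bar>P' t\<bar> * (LINT s|lborel. \<bar>Q' s\<bar>)"])
      show "integrable lborel (\<lambda>t. \<bar>P' t\<bar> * (LINT s|lborel. \<bar>Q' s\<bar>))"
        using P'i by (intro integrable_mult_left) auto
      show "(\<lambda>x. LINT y|lborel. norm (case (x, y) of (t, s) \<Rightarrow> f t s)) \<in> borel_measurable lborel"
      proof -
        have "(\<lambda>(x, y). norm (f x y)) \<in> borel_measurable (lborel \<Otimes>\<^sub>M lborel)"
          using fm by measurable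
        then have "(\<lambda>x. LINT y|lborel. norm (f x y)) \<in> borel_measurable lborel"
          by (rule lborel.borel_measurable_lebesgue_integral)
        then show ?thesis by simp
      qed
      show "AE x in lborel. norm (LINT y|lborel. norm (case (x, y) of (t, s) \<Rightarrow> f t s)) \<le> norm (\<bar>P' x\<bar> * (LINT s|lborel. \<bar>Q' s\<bar>))"
      proof (rule AE_I2)
        fix t :: real
        have "(LINT y|lborel. norm (f t y)) \<le> (LINT s|lborel. \<bar>P' t\<bar> * \<bar>Q' s\<bar>)"
        proof (rule Bochner_Integration.integral_mono)
          have "integrable lborel (\<lambda>s. indicator {..t} s *\<^sub>R (\<bar>P' t\<bar> * \<bar>Q' s\<bar>))"
            by (rule integrable_mult_indicator) (use Q'i in auto)
          moreover have "(\<lambda>y. norm (f t y)) = (\<lambda>s. indicator {..t} s *\<^sub>R (\<bar>P' t\<bar> * \<bar>Q' s\<bar>))"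
            unfolding f_def by (auto simp: fun_eq_iff indicator_def abs_mult)
          ultimately show "integrable lborel (\<lambda>y. norm (f t y))" by simp
          show "integrable lborel (\<lambda>s. \<bar>P' t\<bar> * \<bar>Q' s\<bar>)" using Q'i by auto
          show "norm (f t y) \<le> \<bar>P' t\<bar> * \<bar>Q' y\<bar>" for y unfolding f_def by (simp add: abs_mult)
        qed
        also have "\<dots> = \<bar>P' t\<bar> * (LINT s|lborel. \<bar>Q' s\<bar>)" by simp
        finally have "(LINT y|lborel. norm (f t y)) \<le> \<bar>P' t\<bar> * (LINT s|lborel. \<bar>Q' s\<bar>)" .
        moreover have "(LINT y|lborel. norm (f t y)) \<ge> 0" by (rule integral_nonneg_AE) auto
        moreover have "(LINT s|lborel. \<bar>Q' s\<bar>) \<ge> 0" by (rule integral_nonneg_AE) auto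
        ultimately show "norm (LINT y|lborel. norm (case (t, y) of (t, s) \<Rightarrow> f t s)) \<le> norm (\<bar>P' t\<bar> * (LINT s|lborel. \<bar>Q' s\<bar>))"
          by simp
      qed
    qed
  qed
  have F: "(LINT s|lborel. LINT t|lborel. f t s) = (LINT t|lborel. LINT s|lborel. f t s)"
    using lborel_pair.Fubini_integral[of f] fint by simp
  have L: "(LINT t:{a..b}|lborel. p t * (LINT s:{a..t}|lborel. q s)) = (LINT t|lborel. LINT s|lborel. f t s)"
    unfolding set_lebesgue_integral_def
  proof (rule Bochner_Integration.integral_cong[OF refl])
    fix t :: real
    show "indicat_real {a..b} t *\<^sub>R (p t * (LBINT s. indicat_real {a..t} s *\<^sub>R q s)) = (LINT s|lborel. f t s)"
    proof (cases "t \<in> {a..b}")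
      case True
      have "(LINT s|lborel. f t s) = (LINT s|lborel. p t * (indicat_real {a..t} s * q s))"
        by (rule Bochner_Integration.integral_cong[OF refl]) (use True in \<open>auto simp: f_def P'_def Q'_def indicator_def\<close>)
      then show ?thesis using True by simp
    next
      case False
      then have z: "P' t = 0" by (simp add: P'_def)
      have "(\<lambda>s. f t s) = (\<lambda>s. 0)" unfolding f_def z by (rule ext) auto
      then show ?thesis using False by simp
    qed
  qed
  have R: "(LINT s:{a..b}|lborel. q s * (LINT t:{s..b}|lborel. p t)) = (LINT s|lborel. LINT t|lborel. f t s)"
    unfolding set_lebesgue_integral_def
  proof (rule Bochner_Integration.integral_cong[OF refl])
    fix s :: real
    show "indicat_real {a..b} s *\<^sub>R (q s * (LBINT t. indicat_real {s..b} t *\<^sub>R p t)) = (LINT t|lborel. f t s)"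
    proof (cases "s \<in> {a..b}")
      case True
      have "(LINT t|lborel. f t s) = (LINT t|lborel. q s * (indicat_real {s..b} t * p t))"
        by (rule Bochner_Integration.integral_cong[OF refl]) (use True in \<open>auto simp: f_def P'_def Q'_def indicator_def\<close>)
      then show ?thesis using True by simp
    next
      case False
      then have z: "Q' s = 0" by (simp add: Q'_def)
      have "(\<lambda>t. f t s) = (\<lambda>t. 0)" unfolding f_def z by (rule ext) auto
      then show ?thesis using False by simp
    qed
  qed
  show ?thesis unfolding L R F ..
qed

lemma prod_rule0:
  fixes p q :: "real \<Rightarrow> real"
  assumes ab: "a \<le> b" and pi: "set_integrable lborel {a..b} p" and qi: "set_integrable lborel {a..b} q"
  shows "set_integrable lborel {a..b} (\<lambda>t. (LINT s:{a..t}|lborel. p s) * q t + p t * (LINT s:{a..t}|lborel. q s))"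
    and "(LINT s:{a..b}|lborel. p s) * (LINT s:{a..b}|lborel. q s)
         = (LINT t:{a..b}|lborel. (LINT s:{a..t}|lborel. p s) * q t + p t * (LINT s:{a..t}|lborel. q s))"
proof -
  define P where "P t = (LINT s:{a..t}|lborel. p s)" for t
  define Q where "Q t = (LINT s:{a..t}|lborel. q s)" for t
  have cP: "continuous_on {a..b} P" unfolding P_def by (rule P_cont[OF pi])
  have cQ: "continuous_on {a..b} Q" unfolding Q_def by (rule P_cont[OF qi])
  have i1: "set_integrable lborel {a..b} (\<lambda>t. P t * q t)"
    using bounded_times_integrable[OF qi cP] by (simp add: mult.commute)
  have i2: "set_integrable lborel {a..b} (\<lambda>t. p t * Q t)"
    by (rule bounded_times_integrable[OF pi cQ])
  show "set_integrable lborel {a..b} (\<lambda>t. (LINT s:{a..t}|lborel. p s) * q t + p t * (LINT s:{a..t}|lborel. q s))"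
    using set_integral_add(1)[OF i1 i2] unfolding P_def Q_def .
  have i3: "set_integrable lborel {a..b} (\<lambda>t. q t * P t)"
    by (rule bounded_times_integrable[OF qi cP])
  have i4: "set_integrable lborel {a..b} (\<lambda>t. q t * P b)" using qi by simp
  have "(LINT t:{a..b}|lborel. p t * Q t) = (LINT t:{a..b}|lborel. q t * (LINT s:{t..b}|lborel. p s))"
    unfolding Q_def by (rule fubini_swap[OF pi qi])
  also have "\<dots> = (LINT t:{a..b}|lborel. q t * P b - q t * P t)"
  proof (rule set_lebesgue_integral_cong)
    show "{a..b} \<in> sets lborel" by simp
    show "\<forall>t. t \<in> {a..b} \<longrightarrow> q t * (LINT s:{t..b}|lborel. p s) = q t * P b - q t * P t"
    proof (intro allI impI)
      fix t assume t: "t \<in> {a..b}"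
      have "P t + (LINT s:{t..b}|lborel. p s) = P b"
        unfolding P_def by (rule split_at[OF pi]) (use t in auto)
      then have "(LINT s:{t..b}|lborel. p s) = P b - P t" by linarith
      then show "q t * (LINT s:{t..b}|lborel. p s) = q t * P b - q t * P t"
        by (simp only: right_diff_distrib)
    qed
  qed
  also have "\<dots> = (LINT t:{a..b}|lborel. q t * P b) - (LINT t:{a..b}|lborel. q t * P t)"
    by (rule set_integral_diff(2)[OF i4 i3])
  also have "(LINT t:{a..b}|lborel. q t * P b) = Q b * P b" unfolding Q_def by simp
  finally have e: "(LINT t:{a..b}|lborel. p t * Q t) = Q b * P b - (LINT t:{a..b}|lborel. P t * q t)"
    by (simp add: mult.commute)
  have "(LINT t:{a..b}|lborel. P t * q t + p t * Q t) = (LINT t:{a..b}|lborel. P t * q t) + (LINT t:{a..b}|lborel. p t * Q t)"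
    by (rule set_integral_add(2)[OF i1 i2])
  also have "\<dots> = P b * Q b" unfolding e by simp
  finally show "(LINT s:{a..b}|lborel. p s) * (LINT s:{a..b}|lborel. q s)
         = (LINT t:{a..b}|lborel. (LINT s:{a..t}|lborel. p s) * q t + p t * (LINT s:{a..t}|lborel. q s))"
    unfolding P_def Q_def by simp
qed

lemma prod_rule:
  fixes p q P Q :: "real \<Rightarrow> real"
  assumes ab: "a \<le> b" and pi: "set_integrable lborel {a..b} p" and qi: "set_integrable lborel {a..b} q"
    and P: "\<And>t. a \<le> t \<Longrightarrow> t \<le> b \<Longrightarrow> P t = P a + (LINT s:{a..t}|lborel. p s)"
    and Q: "\<And>t. a \<le> t \<Longrightarrow> t \<le> b \<Longrightarrow> Q t = Q a + (LINT s:{a..t}|lborel. q s)"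
  shows "set_integrable lborel {a..b} (\<lambda>t. P t * q t + p t * Q t)"
    and "P b * Q b - P a * Q a = (LINT t:{a..b}|lborel. P t * q t + p t * Q t)"
proof -
  define P' where "P' t = (LINT s:{a..t}|lborel. p s)" for t
  define Q' where "Q' t = (LINT s:{a..t}|lborel. q s)" for t
  have e: "P t * q t + p t * Q t = (P a * q t + Q a * p t) + (P' t * q t + p t * Q' t)" if "t \<in> {a..b}" for t
    using P[of t] Q[of t] that unfolding P'_def Q'_def by (simp add: algebra_simps)
  have i0: "set_integrable lborel {a..b} (\<lambda>t. P' t * q t + p t * Q' t)"
    unfolding P'_def Q'_def by (rule prod_rule0(1)[OF ab pi qi])
  have i1: "set_integrable lborel {a..b} (\<lambda>t. P a * q t + Q a * p t)"
    using pi qi by (intro set_integral_add) auto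
  have i: "set_integrable lborel {a..b} (\<lambda>t. (P a * q t + Q a * p t) + (P' t * q t + p t * Q' t))"
    by (rule set_integral_add(1)[OF i1 i0])
  show "set_integrable lborel {a..b} (\<lambda>t. P t * q t + p t * Q t)"
    by (rule set_integrable_cong[THEN iffD2, OF refl refl _ i]) (use e in auto)
  have "(LINT t:{a..b}|lborel. P t * q t + p t * Q t) = (LINT t:{a..b}|lborel. (P a * q t + Q a * p t) + (P' t * q t + p t * Q' t))"
    by (rule set_lebesgue_integral_cong) (use e in auto)
  also have "\<dots> = (LINT t:{a..b}|lborel. P a * q t + Q a * p t) + (LINT t:{a..b}|lborel. P' t * q t + p t * Q' t)"
    by (rule set_integral_add(2)[OF i1 i0])
  also have "(LINT t:{a..b}|lborel. P a * q t + Q a * p t) = P a * Q' b + Q a * P' b"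
    unfolding P'_def Q'_def using pi qi by (subst set_integral_add(2)) auto
  also have "(LINT t:{a..b}|lborel. P' t * q t + p t * Q' t) = P' b * Q' b"
    unfolding P'_def Q'_def by (rule prod_rule0(2)[OF ab pi qi, symmetric])
  finally show "P b * Q b - P a * Q a = (LINT t:{a..b}|lborel. P t * q t + p t * Q t)"
    using P[of b] Q[of b] ab unfolding P'_def Q'_def by (simp add: algebra_simps)
qed


lemma Re_part:
  assumes "H1_0 psi g" "0 \<le> t"
  shows "set_integrable lborel {0..t} (\<lambda>x. Re (g x))" "Re (psi t) = (LINT s:{0..t}|lborel. Re (g s))"
proof -
  have gi: "set_integrable lborel {0..t} g" and pe: "psi t = (LINT s:{0..t}|lborel. g s)"
    using assms unfolding H1_0_def by auto
  have "integrable lborel (\<lambda>x. Re (indicator {0..t} x *\<^sub>R g x))"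
    using gi unfolding set_integrable_def by (rule integrable_Re)
  then show "set_integrable lborel {0..t} (\<lambda>x. Re (g x))" unfolding set_integrable_def by simp
  have "Re (psi t) = Re (integral\<^sup>L lborel (\<lambda>x. indicator {0..t} x *\<^sub>R g x))"
    unfolding pe set_lebesgue_integral_def ..
  also have "\<dots> = integral\<^sup>L lborel (\<lambda>x. Re (indicator {0..t} x *\<^sub>R g x))"
    using gi unfolding set_integrable_def by (rule integral_Re[symmetric])
  finally show "Re (psi t) = (LINT s:{0..t}|lborel. Re (g s))"
    unfolding set_lebesgue_integral_def by simp
qed

lemma Im_part:
  assumes "H1_0 psi g" "0 \<le> t"
  shows "set_integrable lborel {0..t} (\<lambda>x. Im (g x))" "Im (psi t) = (LINT s:{0..t}|lborel. Im (g s))"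
proof -
  have gi: "set_integrable lborel {0..t} g" and pe: "psi t = (LINT s:{0..t}|lborel. g s)"
    using assms unfolding H1_0_def by auto
  have "integrable lborel (\<lambda>x. Im (indicator {0..t} x *\<^sub>R g x))"
    using gi unfolding set_integrable_def by (rule integrable_Im)
  then show "set_integrable lborel {0..t} (\<lambda>x. Im (g x))" unfolding set_integrable_def by simp
  have "Im (psi t) = Im (integral\<^sup>L lborel (\<lambda>x. indicator {0..t} x *\<^sub>R g x))"
    unfolding pe set_lebesgue_integral_def ..
  also have "\<dots> = integral\<^sup>L lborel (\<lambda>x. Im (indicator {0..t} x *\<^sub>R g x))"
    using gi unfolding set_integrable_def by (rule integral_Im[symmetric])
  finally show "Im (psi t) = (LINT s:{0..t}|lborel. Im (g s))"
    unfolding set_lebesgue_integral_def by simp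
qed

locale gs =
  fixes l e :: real
  assumes l: "l > 0" and e: "0 < e" "e < x0"
begin

definition ph :: "real \<Rightarrow> real" where "ph x = Ai (l * x - x0 + e)"
definition phd :: "real \<Rightarrow> real" where "phd x = l * Aid (l * x - x0 + e)"
definition V :: "real \<Rightarrow> real" where "V x = l ^ 3 * x - l\<^sup>2 * (x0 - e)"
definition w :: "real \<Rightarrow> real" where "w x = phd x / ph x"

lemma ph_pos: "x \<ge> 0 \<Longrightarrow> ph x > 0"
proof -
  assume x: "x \<ge> 0"
  have "l * x \<ge> 0" using l x by simp
  then show "ph x > 0" unfolding ph_def using e by (intro Ai_pos_right) simp
qed

lemma ph_pos': "x > - e / l \<Longrightarrow> ph x > 0"
proof -
  assume x: "x > - e / l"
  then have "l * x > - e" using l by (simp add: field_simps)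
  then show "ph x > 0" unfolding ph_def by (intro Ai_pos_right) simp
qed

lemma ph_D: "DERIV ph x :> phd x"
proof -
  have "((\<lambda>x. Ai (l * x - x0 + e)) has_real_derivative Aid (l * x - x0 + e) * l) (at x)"
    by (rule DERIV_chain2[where f=Ai, OF Ai_D]) (auto intro!: derivative_eq_intros)
  then show ?thesis unfolding ph_def phd_def by (simp add: mult.commute)
qed

lemma phd_D: "DERIV phd x :> V x * ph x"
proof -
  have "((\<lambda>x. Aid (l * x - x0 + e)) has_real_derivative (l * x - x0 + e) * Ai (l * x - x0 + e) * l) (at x)"
    by (rule DERIV_chain2[where f=Aid, OF Aid_D]) (auto intro!: derivative_eq_intros)
  then have "DERIV phd x :> l * ((l * x - x0 + e) * Ai (l * x - x0 + e) * l)"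
    unfolding phd_def by (rule DERIV_cmult)
  then show ?thesis unfolding V_def ph_def by (simp add: algebra_simps power2_eq_square power3_eq_cube)
qed

lemma w_D: "x \<ge> 0 \<Longrightarrow> DERIV w x :> V x - (w x)\<^sup>2"
proof -
  assume x: "x \<ge> 0"
  have p: "ph x \<noteq> 0" using ph_pos[OF x] by simp
  have "DERIV w x :> (V x * ph x * ph x - phd x * phd x) / (ph x * ph x)"
    unfolding w_def by (rule DERIV_divide[OF phd_D ph_D p])
  then show ?thesis using p unfolding w_def by (simp add: field_simps power2_eq_square)
qed

lemma isCont_ph: "isCont ph x" using ph_D DERIV_isCont by blast
lemma isCont_phd: "isCont phd x" using phd_D DERIV_isCont by blast

lemma cont_w: "continuous_on {0..b} w"
  unfolding w_def
  by (intro continuous_at_imp_continuous_on ballI continuous_intros isCont_ph isCont_phd)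
     (use ph_pos in force)

lemma cont_w': "continuous_on {0..b} (\<lambda>x. V x - (w x)\<^sup>2)"
  unfolding V_def by (intro continuous_intros cont_w)

lemma w_ftc: "0 \<le> t \<Longrightarrow> w t = w 0 + (LINT s:{0..t}|lborel. V s - (w s)\<^sup>2)"
proof -
  assume t: "0 \<le> t"
  have "(LBINT s=ereal 0..ereal t. V s - (w s)\<^sup>2) = w t - w 0"
  proof (rule interval_integral_FTC_finite)
    show "continuous_on {min 0 t..max 0 t} (\<lambda>s. V s - (w s)\<^sup>2)" using t cont_w'[of t] by simp
    fix x assume "min 0 t \<le> x" "x \<le> max 0 t"
    then have x: "x \<ge> 0" using t by simp
    show "(w has_vector_derivative V x - (w x)\<^sup>2) (at x within {min 0 t..max 0 t})"
      using w_D[OF x] by (simp add: has_real_derivative_iff_has_vector_derivative[symmetric] has_field_derivative_at_within)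
  qed
  then show ?thesis using t by (simp add: interval_integral_Icc)
qed

lemma component:
  fixes u v :: "real \<Rightarrow> real"
  assumes b: "0 \<le> b" and vi: "set_integrable lborel {0..b} v"
    and v2: "set_integrable lborel {0..b} (\<lambda>x. (v x)\<^sup>2)"
    and u: "\<And>t. 0 \<le> t \<Longrightarrow> t \<le> b \<Longrightarrow> u t = (LINT s:{0..t}|lborel. v s)"
  shows "set_integrable lborel {0..b} (\<lambda>x. (v x)\<^sup>2 + V x * (u x)\<^sup>2)"
    and "w b * (u b)\<^sup>2 \<le> (LINT x:{0..b}|lborel. (v x)\<^sup>2 + V x * (u x)\<^sup>2)"
proof -
  have u0: "u 0 = 0"
  proof -
    have "u 0 = (LINT s:{0..0}|lborel. v s)" using u[of 0] b by simp
    also have "\<dots> = 0" using interval_integral_Icc[of 0 0 v] by simp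
    finally show ?thesis .
  qed
  have cu: "continuous_on {0..b} u"
    by (rule continuous_on_eq[OF P_cont[OF vi]]) (use u in auto)
  have vit: "set_integrable lborel {0..t} v" if "t \<le> b" for t
    by (rule set_integrable_subset[OF vi]) (use that in auto)
  define q where "q s = 2 * u s * v s" for s
  have step1: "(u t)\<^sup>2 = (LINT s:{0..t}|lborel. q s)" if t: "0 \<le> t" "t \<le> b" for t
  proof -
    have "u t * u t - u 0 * u 0 = (LINT s:{0..t}|lborel. u s * v s + v s * u s)"
      by (rule prod_rule(2)[OF t(1) vit[OF t(2)] vit[OF t(2)]]) (use u u0 t in auto)
    then show ?thesis using u0 unfolding q_def by (simp add: power2_eq_square algebra_simps)
  qed
  have qi: "set_integrable lborel {0..b} q"
  proof -
    have "set_integrable lborel {0..b} (\<lambda>s. u s * v s + v s * u s)"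
      by (rule prod_rule(1)[OF b vi vi]) (use u u0 in auto)
    then show ?thesis unfolding q_def by (simp add: algebra_simps)
  qed
  have pi: "set_integrable lborel {0..b} (\<lambda>s. V s - (w s)\<^sup>2)"
    by (rule borel_integrable_atLeastAtMost'[OF cont_w'])
  have PR: "set_integrable lborel {0..b} (\<lambda>t. w t * q t + (V t - (w t)\<^sup>2) * (u t)\<^sup>2)"
     "w b * (u b)\<^sup>2 - w 0 * (u 0)\<^sup>2 = (LINT t:{0..b}|lborel. w t * q t + (V t - (w t)\<^sup>2) * (u t)\<^sup>2)"
  proof -
    have P: "\<And>t. 0 \<le> t \<Longrightarrow> t \<le> b \<Longrightarrow> w t = w 0 + (LINT s:{0..t}|lborel. V s - (w s)\<^sup>2)"
      using w_ftc by blast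
    have Q: "\<And>t. 0 \<le> t \<Longrightarrow> t \<le> b \<Longrightarrow> (u t)\<^sup>2 = (u 0)\<^sup>2 + (LINT s:{0..t}|lborel. q s)"
      using step1 u0 by simp
    note R = prod_rule[OF b pi qi, of w "\<lambda>t. (u t)\<^sup>2", OF P Q]
    show "set_integrable lborel {0..b} (\<lambda>t. w t * q t + (V t - (w t)\<^sup>2) * (u t)\<^sup>2)"
      by (rule R(1))
    show "w b * (u b)\<^sup>2 - w 0 * (u 0)\<^sup>2 = (LINT t:{0..b}|lborel. w t * q t + (V t - (w t)\<^sup>2) * (u t)\<^sup>2)"
      by (rule R(2))
  qed
  have cVu: "continuous_on {0..b} (\<lambda>x. V x * (u x)\<^sup>2)"
    unfolding V_def by (intro continuous_intros cu)
  show I: "set_integrable lborel {0..b} (\<lambda>x. (v x)\<^sup>2 + V x * (u x)\<^sup>2)"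
    by (rule set_integral_add(1)[OF v2 borel_integrable_atLeastAtMost'[OF cVu]])
  have "(LINT t:{0..b}|lborel. w t * q t + (V t - (w t)\<^sup>2) * (u t)\<^sup>2) \<le> (LINT x:{0..b}|lborel. (v x)\<^sup>2 + V x * (u x)\<^sup>2)"
  proof (rule set_integral_mono[OF PR(1) I])
    fix t assume "t \<in> {0..b}"
    have "0 \<le> (v t - w t * u t)\<^sup>2" by simp
    then show "w t * q t + (V t - (w t)\<^sup>2) * (u t)\<^sup>2 \<le> (v t)\<^sup>2 + V t * (u t)\<^sup>2"
      unfolding q_def by (simp add: power2_eq_square algebra_simps)
  qed
  then show "w b * (u b)\<^sup>2 \<le> (LINT x:{0..b}|lborel. (v x)\<^sup>2 + V x * (u x)\<^sup>2)"
    using PR(2) u0 by simp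
qed

lemma finite_b:
  assumes H: "H1_0 psi g" and b: "0 \<le> b"
  shows "set_integrable lborel {0..b} (\<lambda>x. (cmod (g x))\<^sup>2 + V x * (cmod (psi x))\<^sup>2)"
    and "w b * (cmod (psi b))\<^sup>2 \<le> (LINT x:{0..b}|lborel. (cmod (g x))\<^sup>2 + V x * (cmod (psi x))\<^sup>2)"
proof -
  have gm[measurable]: "g \<in> borel_measurable lborel" using H unfolding H1_0_def by simp
  have g2: "set_integrable lborel {0..b} (\<lambda>x. (cmod (g x))\<^sup>2)"
    using H unfolding H1_0_def by (auto intro: set_integrable_subset)
  have re2: "set_integrable lborel {0..b} (\<lambda>x. (Re (g x))\<^sup>2)"
  proof (rule set_integrable_bound[OF g2])
    show "set_borel_measurable lborel {0..b} (\<lambda>x. (Re (g x))\<^sup>2)"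
      unfolding set_borel_measurable_def by measurable
    show "AE x in lborel. x \<in> {0..b} \<longrightarrow> norm ((Re (g x))\<^sup>2) \<le> norm ((cmod (g x))\<^sup>2)"
      by (rule AE_I2) (simp add: cmod_power2)
  qed
  have im2: "set_integrable lborel {0..b} (\<lambda>x. (Im (g x))\<^sup>2)"
  proof (rule set_integrable_bound[OF g2])
    show "set_borel_measurable lborel {0..b} (\<lambda>x. (Im (g x))\<^sup>2)"
      unfolding set_borel_measurable_def by measurable
    show "AE x in lborel. x \<in> {0..b} \<longrightarrow> norm ((Im (g x))\<^sup>2) \<le> norm ((cmod (g x))\<^sup>2)"
      by (rule AE_I2) (simp add: cmod_power2)
  qed
  note CR = component[OF b Re_part(1)[OF H b] re2, of "\<lambda>x. Re (psi x)"]
  note CI = component[OF b Im_part(1)[OF H b] im2, of "\<lambda>x. Im (psi x)"]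
  have R1: "set_integrable lborel {0..b} (\<lambda>x. (Re (g x))\<^sup>2 + V x * (Re (psi x))\<^sup>2)"
    and R2: "w b * (Re (psi b))\<^sup>2 \<le> (LINT x:{0..b}|lborel. (Re (g x))\<^sup>2 + V x * (Re (psi x))\<^sup>2)"
    using CR Re_part(2)[OF H] by auto
  have I1: "set_integrable lborel {0..b} (\<lambda>x. (Im (g x))\<^sup>2 + V x * (Im (psi x))\<^sup>2)"
    and I2: "w b * (Im (psi b))\<^sup>2 \<le> (LINT x:{0..b}|lborel. (Im (g x))\<^sup>2 + V x * (Im (psi x))\<^sup>2)"
    using CI Im_part(2)[OF H] by auto
  have e: "(cmod (g x))\<^sup>2 + V x * (cmod (psi x))\<^sup>2
      = ((Re (g x))\<^sup>2 + V x * (Re (psi x))\<^sup>2) + ((Im (g x))\<^sup>2 + V x * (Im (psi x))\<^sup>2)" for x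
    by (simp add: cmod_power2 algebra_simps)
  show "set_integrable lborel {0..b} (\<lambda>x. (cmod (g x))\<^sup>2 + V x * (cmod (psi x))\<^sup>2)"
    unfolding e by (rule set_integral_add(1)[OF R1 I1])
  have "(LINT x:{0..b}|lborel. (cmod (g x))\<^sup>2 + V x * (cmod (psi x))\<^sup>2)
     = (LINT x:{0..b}|lborel. (Re (g x))\<^sup>2 + V x * (Re (psi x))\<^sup>2) + (LINT x:{0..b}|lborel. (Im (g x))\<^sup>2 + V x * (Im (psi x))\<^sup>2)"
    unfolding e by (rule set_integral_add(2)[OF R1 I1])
  moreover have "w b * (cmod (psi b))\<^sup>2 = w b * (Re (psi b))\<^sup>2 + w b * (Im (psi b))\<^sup>2"
    by (simp add: cmod_power2 algebra_simps)
  ultimately show "w b * (cmod (psi b))\<^sup>2 \<le> (LINT x:{0..b}|lborel. (cmod (g x))\<^sup>2 + V x * (cmod (psi x))\<^sup>2)"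
    using R2 I2 by linarith
qed

lemma w_bound:
  assumes b: "b \<ge> 0" "b \<ge> (x0 - e) / l"
  shows "- w b \<le> 1 + V (b + 1)"
proof -
  have arg: "l * x - x0 + e \<ge> 0" if "x \<ge> (x0 - e) / l" for x
    using that l by (simp add: field_simps)
  have phd_np: "phd x \<le> 0" if "x \<ge> (x0 - e) / l" for x
    unfolding phd_def using Aid_nonpos[OF arg[OF that]] l by (simp add: mult_nonneg_nonpos)
  have V_nn: "V x \<ge> 0" if "x \<ge> (x0 - e) / l" for x
  proof -
    have "V x = l\<^sup>2 * (l * x - x0 + e)" unfolding V_def by (simp add: algebra_simps power2_eq_square power3_eq_cube)
    then show ?thesis using arg[OF that] by simp
  qed
  have V_mono: "V x \<le> V y" if "x \<le> y" for x y
    unfolding V_def using that l by (simp add: mult_left_mono)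
  have ph_mono: "ph y \<le> ph x" if "(x0 - e) / l \<le> x" "x \<le> y" for x y
    by (rule DERIV_nonpos_imp_nonincreasing[OF that(2)]) (use that ph_D phd_np in force)
  have pos: "ph x > 0" if "x \<ge> 0" for x using ph_pos that by simp
  obtain xi where xi: "b < xi" "xi < b + 1" "ph (b + 1) - ph b = (b + 1 - b) * phd xi"
    using MVT2[of b "b + 1" ph phd] ph_D by auto
  obtain eta where eta: "b < eta" "eta < xi" "phd xi - phd b = (xi - b) * (V eta * ph eta)"
    using MVT2[of b xi phd "\<lambda>x. V x * ph x"] phd_D xi(1) by auto
  have Vph: "V eta * ph eta \<le> V (b + 1) * ph b"
  proof (rule mult_mono)
    show "V eta \<le> V (b + 1)" using V_mono eta xi by simp
    show "ph eta \<le> ph b" using ph_mono[of b eta] b eta by simp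
    show "0 \<le> V (b + 1)" using V_nn b by simp
    show "0 \<le> ph eta" using pos[of eta] b eta by simp
  qed
  have nn: "V eta * ph eta \<ge> 0" using V_nn[of eta] pos[of eta] b eta by simp
  have "(xi - b) * (V eta * ph eta) \<le> 1 * (V eta * ph eta)"
    using xi eta nn by (intro mult_right_mono) auto
  then have "0 < ph b + phd b + V (b + 1) * ph b"
    using xi eta Vph pos[of "b + 1"] b by simp
  then have "- phd b < ph b * (1 + V (b + 1))" by (simp add: algebra_simps)
  then have "- phd b / ph b < 1 + V (b + 1)" using pos[OF b(1)] by (simp add: field_simps)
  then show ?thesis unfolding w_def by simp
qed

end

lemma not_eventually_pos:
  fixes h :: "real \<Rightarrow> real"
  assumes hi: "set_integrable lborel {0..} h" and d: "d > 0" and c: "c \<ge> 0"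
    and hd: "\<And>x. x \<ge> c \<Longrightarrow> h x \<ge> d"
  shows False
proof -
  define I where "I = (LINT x:{0..}|lborel. \<bar>h x\<bar>)"
  define n where "n = I / d + 1"
  have n: "n \<ge> 0"
  proof -
    have "I \<ge> 0" unfolding I_def set_lebesgue_integral_def by (rule integral_nonneg_AE) auto
    then show ?thesis unfolding n_def using d by simp
  qed
  have hc: "set_integrable lborel {c..c+n} h" by (rule set_integrable_subset[OF hi]) (use c in auto)
  have "d * n = (LINT x:{c..c+n}|lborel. d)"
  proof -
    have 1: "(LBINT x=ereal c..ereal (c+n). d) = (LINT x:{c..c+n}|lborel. d)"
      by (rule interval_integral_Icc) (use n in simp)
    have 2: "(LBINT x=ereal c..ereal (c+n). d) = d * (c + n - c)"
      by (rule interval_integral_const(2))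
    show ?thesis using 1 2 by simp
  qed
  also have "\<dots> \<le> (LINT x:{c..c+n}|lborel. h x)"
  proof (rule set_integral_mono)
    show "set_integrable lborel {c..c + n} (\<lambda>x. d)"
      by (rule borel_integrable_atLeastAtMost') simp
    show "set_integrable lborel {c..c + n} h" by (rule hc)
    show "\<And>x. x \<in> {c..c + n} \<Longrightarrow> d \<le> h x" using hd by auto
  qed
  also have "\<dots> \<le> I"
    unfolding I_def set_lebesgue_integral_def
  proof (rule Bochner_Integration.integral_mono)
    show "integrable lborel (\<lambda>x. indicat_real {c..c + n} x *\<^sub>R h x)"
      using hc unfolding set_integrable_def .
    show "integrable lborel (\<lambda>x. indicat_real {0..} x *\<^sub>R \<bar>h x\<bar>)"
      using set_integrable_abs[OF hi] unfolding set_integrable_def by simp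
    fix x :: real
    show "indicat_real {c..c + n} x *\<^sub>R h x \<le> indicat_real {0..} x *\<^sub>R \<bar>h x\<bar>"
      using hd[of x] c d by (auto simp: indicator_def)
  qed
  finally have "d * n \<le> I" .
  moreover have "d * n = I + d" unfolding n_def using d by (simp add: field_simps)
  ultimately show False using d by simp
qed


context gs
begin

lemma gs_ineq:
  assumes D: "D1 psi g"
  shows "0 \<le> defect g + (LINT x:{0..}|lborel. V x * (cmod (psi x))\<^sup>2)"
proof (rule ccontr)
  have H: "H1_0 psi g" and Ni: "set_integrable lborel {0..} (\<lambda>x. (cmod (psi x))\<^sup>2)"
    and Gi: "set_integrable lborel {0..} (\<lambda>x. (cmod (g x))\<^sup>2)"
    and Mi: "set_integrable lborel {0..} (\<lambda>x. x * (cmod (psi x))\<^sup>2)"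
    using D unfolding D1_def H1_0_def by auto
  have Vi: "set_integrable lborel {0..} (\<lambda>x. V x * (cmod (psi x))\<^sup>2)"
  proof -
    have "set_integrable lborel {0..} (\<lambda>x. l ^ 3 * (x * (cmod (psi x))\<^sup>2) - l\<^sup>2 * (x0 - e) * (cmod (psi x))\<^sup>2)"
      using Mi Ni by (intro set_integral_diff(1) set_integrable_mult_right)
    then show ?thesis unfolding V_def by (simp add: algebra_simps)
  qed
  define F where "F x = (cmod (g x))\<^sup>2 + V x * (cmod (psi x))\<^sup>2" for x
  have Fi: "set_integrable lborel {0..} F" unfolding F_def by (rule set_integral_add(1)[OF Gi Vi])
  define L where "L = (LINT x:{0..}|lborel. F x)"
  have Leq: "L = defect g + (LINT x:{0..}|lborel. V x * (cmod (psi x))\<^sup>2)"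
    unfolding L_def F_def defect_def by (rule set_integral_add(2)[OF Gi Vi])
  assume "\<not> 0 \<le> defect g + (LINT x:{0..}|lborel. V x * (cmod (psi x))\<^sup>2)"
  then have L0: "L < 0" unfolding Leq by simp
  have T: "((\<lambda>b. LINT x:{0..b}|lborel. F x) \<longlongrightarrow> L) at_top"
    unfolding L_def by (rule tendsto_set_lebesgue_integral_at_top[OF _ Fi]) auto
  have "\<forall>\<^sub>F b in at_top. (LINT x:{0..b}|lborel. F x) < L / 2"
    using order_tendstoD(2)[OF T, of "L / 2"] L0 by simp
  then obtain B where B: "\<And>b. b \<ge> B \<Longrightarrow> (LINT x:{0..b}|lborel. F x) < L / 2"
    unfolding eventually_at_top_linorder by blast
  define c where "c = max (max B 0) ((x0 - e) / l)"
  define h where "h x = (1 + V (x + 1)) * (cmod (psi x))\<^sup>2" for x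
  have hi: "set_integrable lborel {0..} h"
  proof -
    have "set_integrable lborel {0..} (\<lambda>x. (1 + l ^ 3 - l\<^sup>2 * (x0 - e)) * (cmod (psi x))\<^sup>2 + l ^ 3 * (x * (cmod (psi x))\<^sup>2))"
      using Mi Ni by (intro set_integral_add(1) set_integrable_mult_right)
    then show ?thesis unfolding h_def V_def by (simp add: algebra_simps)
  qed
  have hd: "h x \<ge> - L / 2" if x: "x \<ge> c" for x
  proof -
    have x0': "x \<ge> 0" "x \<ge> B" "x \<ge> (x0 - e) / l" using x unfolding c_def by auto
    have "w x * (cmod (psi x))\<^sup>2 \<le> (LINT y:{0..x}|lborel. F y)"
      unfolding F_def by (rule finite_b(2)[OF H x0'(1)])
    also have "\<dots> < L / 2" by (rule B[OF x0'(2)])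
    finally have 1: "- w x * (cmod (psi x))\<^sup>2 > - L / 2" by simp
    have "- w x * (cmod (psi x))\<^sup>2 \<le> (1 + V (x + 1)) * (cmod (psi x))\<^sup>2"
      by (rule mult_right_mono[OF w_bound[OF x0'(1) x0'(3)]]) simp
    then show ?thesis using 1 unfolding h_def by simp
  qed
  have c0: "c \<ge> 0" unfolding c_def by simp
  show False
    by (rule not_eventually_pos[OF hi _ c0 hd]) (use L0 in simp)
qed

end

lemma moment_identity:
  assumes D: "D1 psi g"
  shows "(LINT x:{0..}|lborel. (l ^ 3 * x - l\<^sup>2 * (x0 - e)) * (cmod (psi x))\<^sup>2) = l ^ 3 * moment psi - l\<^sup>2 * (x0 - e)"
proof -
  have Ni: "set_integrable lborel {0..} (\<lambda>x. (cmod (psi x))\<^sup>2)"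
    and N1: "(LINT x:{0..}|lborel. (cmod (psi x))\<^sup>2) = 1"
    and Mi: "set_integrable lborel {0..} (\<lambda>x. x * (cmod (psi x))\<^sup>2)"
    using D unfolding D1_def H1_0_def by auto
  have "(LINT x:{0..}|lborel. (l ^ 3 * x - l\<^sup>2 * (x0 - e)) * (cmod (psi x))\<^sup>2)
      = (LINT x:{0..}|lborel. l ^ 3 * (x * (cmod (psi x))\<^sup>2) - l\<^sup>2 * (x0 - e) * (cmod (psi x))\<^sup>2)"
    by (simp add: algebra_simps)
  also have "\<dots> = (LINT x:{0..}|lborel. l ^ 3 * (x * (cmod (psi x))\<^sup>2)) - (LINT x:{0..}|lborel. l\<^sup>2 * (x0 - e) * (cmod (psi x))\<^sup>2)"
    using Mi Ni by (intro set_integral_diff(2) set_integrable_mult_right)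
  also have "\<dots> = l ^ 3 * moment psi - l\<^sup>2 * (x0 - e)"
    unfolding moment_def using N1 by simp
  finally show ?thesis .
qed

lemma lower_bound_eps:
  assumes D: "D1 psi g" and l: "l > 0" and e: "0 < e" "e < x0"
  shows "l\<^sup>2 * (x0 - e) - l ^ 3 * moment psi \<le> defect g"
proof -
  interpret gs l e using l e by unfold_locales
  have "0 \<le> defect g + (LINT x:{0..}|lborel. V x * (cmod (psi x))\<^sup>2)" by (rule gs_ineq[OF D])
  moreover have "(LINT x:{0..}|lborel. V x * (cmod (psi x))\<^sup>2) = l ^ 3 * moment psi - l\<^sup>2 * (x0 - e)"
    unfolding V_def by (rule moment_identity[OF D])
  ultimately show ?thesis by simp
qed

lemma lower_bound:
  assumes D: "D1 psi g" and l: "l > 0"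
  shows "l\<^sup>2 * x0 - l ^ 3 * moment psi \<le> defect g"
proof (rule ccontr)
  assume "\<not> ?thesis"
  then have gap: "l\<^sup>2 * x0 - l ^ 3 * moment psi - defect g > 0" by simp
  define e where "e = min (x0 / 2) ((l\<^sup>2 * x0 - l ^ 3 * moment psi - defect g) / (2 * l\<^sup>2))"
  have l2: "l\<^sup>2 > 0" using l by simp
  have e: "0 < e" "e < x0" unfolding e_def using x0_pos gap l2 by auto
  have "l\<^sup>2 * (x0 - e) - l ^ 3 * moment psi \<le> defect g" by (rule lower_bound_eps[OF D l e])
  moreover have "l\<^sup>2 * e \<le> (l\<^sup>2 * x0 - l ^ 3 * moment psi - defect g) / 2"
  proof -
    have "e \<le> (l\<^sup>2 * x0 - l ^ 3 * moment psi - defect g) / (2 * l\<^sup>2)" unfolding e_def by simp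
    then have "l\<^sup>2 * e \<le> l\<^sup>2 * ((l\<^sup>2 * x0 - l ^ 3 * moment psi - defect g) / (2 * l\<^sup>2))"
      using l2 by (intro mult_left_mono) auto
    then show ?thesis using l2 by simp
  qed
  ultimately show False using gap by (simp add: algebra_simps)
qed

lemma moment_pos:
  assumes D: "D1 psi g"
  shows "moment psi > 0"
proof -
  have Ni: "set_integrable lborel {0..} (\<lambda>x. (cmod (psi x))\<^sup>2)"
    and N1: "(LINT x:{0..}|lborel. (cmod (psi x))\<^sup>2) = 1"
    and Mi: "set_integrable lborel {0..} (\<lambda>x. x * (cmod (psi x))\<^sup>2)"
    using D unfolding D1_def H1_0_def by auto
  define f where "f x = indicator {0..} x *\<^sub>R (x * (cmod (psi x))\<^sup>2)" for x :: real
  have fi: "integrable lborel f" using Mi unfolding set_integrable_def f_def .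
  have fnn: "AE x in lborel. 0 \<le> f x" by (rule AE_I2) (auto simp: f_def indicator_def)
  have "moment psi \<ge> 0"
    unfolding moment_def set_lebesgue_integral_def by (rule integral_nonneg_AE) (auto simp: indicator_def)
  moreover have "moment psi \<noteq> 0"
  proof
    assume "moment psi = 0"
    then have "integral\<^sup>L lborel f = 0" unfolding moment_def set_lebesgue_integral_def f_def .
    then have ae: "AE x in lborel. f x = 0" using integral_nonneg_eq_0_iff_AE[OF fi fnn] by simp
    have "AE x in lborel. indicator {0..} x *\<^sub>R (cmod (psi x))\<^sup>2 = (0::real)"
      using ae AE_lborel_singleton[of 0]
    proof eventually_elim
      case (elim x)
      then show ?case unfolding f_def by (cases "x \<ge> 0") (auto simp: indicator_def)
    qed
    note ae2 = this
    have m1: "(\<lambda>x. indicator {0..} x *\<^sub>R (cmod (psi x))\<^sup>2) \<in> borel_measurable lborel"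
      using Ni unfolding set_integrable_def by auto
    have "integral\<^sup>L lborel (\<lambda>x. indicator {0..} x *\<^sub>R (cmod (psi x))\<^sup>2) = integral\<^sup>L lborel (\<lambda>x::real. 0::real)"
      by (rule Bochner_Integration.integral_cong_AE[OF m1 _ ae2]) simp
    then have "(LINT x:{0..}|lborel. (cmod (psi x))\<^sup>2) = 0"
      unfolding set_lebesgue_integral_def by simp
    then show False using N1 by simp
  qed
  ultimately show ?thesis by simp
qed

lemma part1:
  assumes m: "m > 0" and D: "D1 psi g" and M: "moment psi = m"
  shows "eta2 / m\<^sup>2 \<le> defect g"
proof -
  define l where "l = Cbar * C1 / m"
  have l: "l > 0" unfolding l_def using Cbar_pos C1_pos m by simp
  have l_eq: "l = MB / (NB * m)" unfolding l_def Cbar_eq C1_eq by simp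
  have "l\<^sup>2 * x0 - l ^ 3 * moment psi \<le> defect g" by (rule lower_bound[OF D l])
  moreover have "l\<^sup>2 * x0 - l ^ 3 * moment psi = eta2 / m\<^sup>2"
  proof -
    have TB: "TB = x0 * NB - MB" using energy_identity by simp
    have "l\<^sup>2 * x0 - l ^ 3 * moment psi = l\<^sup>2 * (x0 - l * m)" unfolding M by (simp add: algebra_simps power2_eq_square power3_eq_cube)
    also have "x0 - l * m = TB / NB" unfolding l_eq TB using NB_pos m by (simp add: field_simps)
    also have "l\<^sup>2 * (TB / NB) = eta2 / m\<^sup>2"
      unfolding eta2_eq l_eq using NB_pos m by (simp add: field_simps power2_eq_square power3_eq_cube)
    finally show ?thesis .
  qed
  ultimately show ?thesis by simp
qed

theorem mainTheorem7:
  fixes m :: real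
  assumes "m > 0"
  shows "(\<forall>\<psi> g. D1 \<psi> g \<and> moment \<psi> = m \<longrightarrow> eta2 / m\<^sup>2 \<le> defect g)
       \<and> (\<exists>c :: complex. \<exists>g.
            D1 (\<lambda>x. c * complex_of_real (Ai ((Cbar * C1 / m) * x - x0))) g
          \<and> moment (\<lambda>x. c * complex_of_real (Ai ((Cbar * C1 / m) * x - x0))) = m
          \<and> defect g = eta2 / m\<^sup>2)
       \<and> (\<forall>\<psi> g. D1 \<psi> g \<longrightarrow> eta2 \<le> defect g * (moment \<psi>)\<^sup>2)"
proof (intro conjI allI impI)
  fix psi g assume "D1 psi g \<and> moment psi = m"
  then show "eta2 / m\<^sup>2 \<le> defect g" using part1[OF assms] by blast
next
  show "\<exists>c :: complex. \<exists>g.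
            D1 (\<lambda>x. c * complex_of_real (Ai ((Cbar * C1 / m) * x - x0))) g
          \<and> moment (\<lambda>x. c * complex_of_real (Ai ((Cbar * C1 / m) * x - x0))) = m
          \<and> defect g = eta2 / m\<^sup>2"
    by (rule profile[OF assms])
next
  fix psi g assume D: "D1 psi g"
  have mp: "moment psi > 0" by (rule moment_pos[OF D])
  have "eta2 / (moment psi)\<^sup>2 \<le> defect g" by (rule part1[OF mp D refl])
  then show "eta2 \<le> defect g * (moment psi)\<^sup>2" using mp by (simp add: field_simps)
qed


end
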